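(* Let $\kappa$ be an infinite regular cardinal with $\kappa^{<\kappa}=\kappa$ and $\mathcal F$ a $(<\kappa)$-complete filter on $\kappa$. Then $\mathbb P(\mathcal F)$, with the orders $\langle\le_\zeta:\zeta<\kappa\rangle$, satisfies Mastering $\kappa$: for every dense $\mathcal D\subseteq\mathbb P(\mathcal F)$, every $p\in\mathbb P(\mathcal F)$ and every $\zeta<\kappa$ there are $q$ with $p\le_\zeta q$ and $\mathcal D'\subseteq\mathcal D$ with $|\mathcal D'|\le\kappa$ which is predense above $q$. Equivalently, whenever $p\Vdash$ "$\dot\tau$ is an ordinal" and $\zeta<\kappa$, there are $q\ge_\zeta p$ and a set of ordinals $X\in\mathbf V$ with $|X|\le\kappa$ such that $q\Vdash\dot\tau\in X$.
   Context: For a subtree $p\subseteq{}^{<\kappa}\kappa$ (nonempty, closed under initial segments), a node $t\in p$ is $\mathcal F$-splitting if $\{\alpha<\kappa: t^\frown\alpha\in p\}\in\mathcal F$. For $s\in p$, $\deg_p(s)=\{i<\mathrm{dom}(s):\exists t\in p\,(t\restriction i=s\restriction i\wedge t(i)\ne s(i))\}$. The forcing $\mathbb P(\mathcal F)$ consists of subtrees $p\subseteq{}^{<\kappa}\kappa$ such that: $\sup\{\mathrm{dom}(s):s\in p\}=\kappa$; every $s\in p$ has an $\mathcal F$-splitting extension $t\supseteq s$ in $p$; (o) for every $s\in p$, the set $\{\alpha:s^\frown\alpha\in p\}$ is either a singleton or belongs to $\mathcal F$; (a) if $\delta<\kappa$ is limit, $s\in{}^\delta\kappa$ and $s\restriction\alpha\in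 p$ for all $\alpha<\delta$, then $s\in p$; (b) for every $s\in p$, $\deg_p(s)$ is closed in $\mathrm{dom}(s)$ (every limit $\gamma<\mathrm{dom}(s)$ with $\deg_p(s)\cap\gamma$ unbounded in $\gamma$ belongs to $\deg_p(s)$). Order: $p\le q$ iff $p\supseteq q$. For $\zeta<\kappa$: $p\le_\zeta q$ iff $p\le q$ and every $s\in p$ with $\mathrm{otp}(\deg_p(s))<\zeta$ belongs to $q$. *)

theory Defs
  imports Main
begin

text \<open>The cardinal kappa is represented by a well-ordered type 'k: the ordinals below kappa
  are the elements of 'k, ordered by the type's order.  kappa itself is the relation kord.\<close>

definition kord :: "('k::wellorder) rel" where
  "kord = {(x, y). x \<le> y}"

text \<open>Elements of ${}^{<\kappa}\kappa$: partial maps whose domain is an initial segment below some delta.\<close>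
definition seqs :: "('k::wellorder \<rightharpoonup> 'k) set" where
  "seqs = {s. \<exists>\<delta>. dom s = {..<\<delta>}}"

definition len :: "('k::wellorder \<rightharpoonup> 'k) \<Rightarrow> 'k" where
  "len s = (LEAST \<delta>. \<delta> \<notin> dom s)"

definition restr :: "('k::wellorder \<rightharpoonup> 'k) \<Rightarrow> 'k \<Rightarrow> ('k \<rightharpoonup> 'k)" where
  "restr s i = s |` {..<i}"

definition ext1 :: "('k::wellorder \<rightharpoonup> 'k) \<Rightarrow> 'k \<Rightarrow> ('k \<rightharpoonup> 'k)" where
  "ext1 s \<alpha> = s(len s \<mapsto> \<alpha>)"

definition is_limit :: "'k::wellorder \<Rightarrow> bool" where
  "is_limit \<gamma> \<longleftrightarrow> (\<exists>\<beta>. \<beta> < \<gamma>) \<and> (\<forall>\<beta><\<gamma>. \<exists>\<beta>'. \<beta> < \<beta>' \<and> \<beta>' < \<gamma>)"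

definition is_filter :: "'k set set \<Rightarrow> bool" where
  "is_filter F \<longleftrightarrow> UNIV \<in> F \<and> {} \<notin> F \<and>
     (\<forall>A B. A \<in> F \<longrightarrow> A \<subseteq> B \<longrightarrow> B \<in> F) \<and>
     (\<forall>A B. A \<in> F \<longrightarrow> B \<in> F \<longrightarrow> A \<inter> B \<in> F)"

definition lt_kappa_complete :: "('k::wellorder) set set \<Rightarrow> bool" where
  "lt_kappa_complete F \<longleftrightarrow>
     (\<forall>X. X \<subseteq> F \<longrightarrow> X \<noteq> {} \<longrightarrow> (card_of X, kord :: 'k rel) \<in> ordLess \<longrightarrow> \<Inter>X \<in> F)"

definition subtree :: "('k::wellorder \<rightharpoonup> 'k) set \<Rightarrow> bool" where
  "subtree p \<longleftrightarrow> p \<noteq> {} \<and> p \<subseteq> seqs \<and> (\<forall>s\<in>p. \<forall>i. restr s i \<in> p)"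

definition succs :: "('k::wellorder \<rightharpoonup> 'k) set \<Rightarrow> ('k \<rightharpoonup> 'k) \<Rightarrow> 'k set" where
  "succs p s = {\<alpha>. ext1 s \<alpha> \<in> p}"

definition F_splitting :: "'k set set \<Rightarrow> ('k::wellorder \<rightharpoonup> 'k) set \<Rightarrow> ('k \<rightharpoonup> 'k) \<Rightarrow> bool" where
  "F_splitting F p t \<longleftrightarrow> t \<in> p \<and> succs p t \<in> F"

definition deg :: "('k::wellorder \<rightharpoonup> 'k) set \<Rightarrow> ('k \<rightharpoonup> 'k) \<Rightarrow> 'k set" where
  "deg p s = {i. i < len s \<and> (\<exists>t\<in>p. restr t i = restr s i \<and> i \<in> dom t \<and> t i \<noteq> s i)}"

definition closed_in :: "'k::wellorder set \<Rightarrow> 'k \<Rightarrow> bool" where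
  "closed_in D \<delta> \<longleftrightarrow> (\<forall>\<gamma><\<delta>. is_limit \<gamma> \<and> (\<forall>\<beta><\<gamma>. \<exists>i\<in>D. \<beta> < i \<and> i < \<gamma>) \<longrightarrow> \<gamma> \<in> D)"

definition PF :: "('k::wellorder) set set \<Rightarrow> ('k \<rightharpoonup> 'k) set set" where
  "PF F = {p. subtree p
      \<and> (\<forall>\<alpha>. \<exists>s\<in>p. \<alpha> < len s)
      \<and> (\<forall>s\<in>p. \<exists>t. s \<subseteq>\<^sub>m t \<and> F_splitting F p t)
      \<and> (\<forall>s\<in>p. (\<exists>\<alpha>. succs p s = {\<alpha>}) \<or> succs p s \<in> F)
      \<and> (\<forall>\<delta> s. is_limit \<delta> \<longrightarrow> dom s = {..<\<delta>} \<longrightarrow> (\<forall>\<alpha><\<delta>. restr s \<alpha> \<in> p) \<longrightarrow> s \<in> p)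
      \<and> (\<forall>s\<in>p. closed_in (deg p s) (len s))}"

definition otp_less :: "'k::wellorder set \<Rightarrow> 'k \<Rightarrow> bool" where
  "otp_less A \<zeta> \<longleftrightarrow> (Restr (kord :: 'k rel) A, Restr (kord :: 'k rel) {..<\<zeta>}) \<in> ordLess"

text \<open>p <= q iff p \<supseteq> q; q is the stronger condition.\<close>
definition le_P :: "('k::wellorder \<rightharpoonup> 'k) set \<Rightarrow> ('k \<rightharpoonup> 'k) set \<Rightarrow> bool" where
  "le_P p q \<longleftrightarrow> q \<subseteq> p"

definition le_zeta :: "'k::wellorder \<Rightarrow> ('k \<rightharpoonup> 'k) set \<Rightarrow> ('k \<rightharpoonup> 'k) set \<Rightarrow> bool" where
  "le_zeta \<zeta> p q \<longleftrightarrow> le_P p q \<and> (\<forall>s\<in>p. otp_less (deg p s) \<zeta> \<longrightarrow> s \<in> q)"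

definition dense_in :: "('k::wellorder \<rightharpoonup> 'k) set set \<Rightarrow> ('k \<rightharpoonup> 'k) set set \<Rightarrow> bool" where
  "dense_in P D \<longleftrightarrow> D \<subseteq> P \<and> (\<forall>p\<in>P. \<exists>d\<in>D. le_P p d)"

definition compatible :: "('k::wellorder \<rightharpoonup> 'k) set set \<Rightarrow> ('k \<rightharpoonup> 'k) set \<Rightarrow> ('k \<rightharpoonup> 'k) set \<Rightarrow> bool" where
  "compatible P a b \<longleftrightarrow> (\<exists>u\<in>P. le_P a u \<and> le_P b u)"

definition predense_above :: "('k::wellorder \<rightharpoonup> 'k) set set \<Rightarrow> ('k \<rightharpoonup> 'k) set set \<Rightarrow> ('k \<rightharpoonup> 'k) set \<Rightarrow> bool" where
  "predense_above P D' q \<longleftrightarrow> (\<forall>r\<in>P. le_P q r \<longrightarrow> (\<exists>d\<in>D'. compatible P r d))"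

end

theory Submission
  imports Defs
begin

unbundle cardinal_syntax


definition nxt :: "'k::wellorder \<Rightarrow> 'k" where "nxt i = (LEAST j. i < j)"

lemma seqs_dom: "s \<in> seqs \<Longrightarrow> dom s = {..<len s}"
proof -
  assume "s \<in> seqs"
  then obtain d where d: "dom s = {..<d}" by (auto simp: seqs_def)
  have "len s = d" unfolding len_def d by (rule Least_equality) (auto simp: not_less)
  with d show ?thesis by simp
qed

lemma len_eq: "dom s = {..<d} \<Longrightarrow> len s = d"
  unfolding len_def by (rule Least_equality) (auto simp: not_less)

lemma in_seqsI: "dom s = {..<d} \<Longrightarrow> s \<in> seqs"
  by (auto simp: seqs_def)

lemma dom_restr: "s \<in> seqs \<Longrightarrow> dom (restr s i) = {..<min (len s) i}"
  by (auto simp: restr_def seqs_dom)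

lemma restr_seqs: "s \<in> seqs \<Longrightarrow> restr s i \<in> seqs"
  by (metis dom_restr in_seqsI)

lemma len_restr: "s \<in> seqs \<Longrightarrow> len (restr s i) = min (len s) i"
  by (metis dom_restr len_eq)

lemma restr_restr: "restr (restr s i) j = restr s (min i j)"
  by (auto simp: restr_def restrict_map_def fun_eq_iff)

lemma restr_full: "s \<in> seqs \<Longrightarrow> len s \<le> i \<Longrightarrow> restr s i = s"
  unfolding restr_def restrict_map_def fun_eq_iff
  using seqs_dom[of s] by (metis domIff lessThan_iff order.strict_trans2)

lemma restr_le: "restr s i \<subseteq>\<^sub>m s"
  by (auto simp: restr_def map_le_def)

lemma map_le_len: "x \<in> seqs \<Longrightarrow> s \<in> seqs \<Longrightarrow> x \<subseteq>\<^sub>m s \<Longrightarrow> len x \<le> len s"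
  by (metis map_le_implies_dom_le lessThan_subset_iff seqs_dom)

lemma map_le_restr: "x \<in> seqs \<Longrightarrow> s \<in> seqs \<Longrightarrow> x \<subseteq>\<^sub>m s \<Longrightarrow> x = restr s (len x)"
  apply (auto simp: restr_def restrict_map_def fun_eq_iff map_le_def seqs_dom)
  by (metis domIff lessThan_iff seqs_dom)

lemma map_le_iff: "x \<in> seqs \<Longrightarrow> s \<in> seqs \<Longrightarrow> x \<subseteq>\<^sub>m s \<longleftrightarrow> (len x \<le> len s \<and> x = restr s (len x))"
  by (metis map_le_len map_le_restr restr_le)

lemma map_le_agree: "a \<subseteq>\<^sub>m b \<or> b \<subseteq>\<^sub>m a \<Longrightarrow> i \<in> dom a \<Longrightarrow> i \<in> dom b \<Longrightarrow> a i = b i"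
  unfolding map_le_def by (elim disjE) (simp_all add: Ball_def)

lemma seqs_None: "s \<in> seqs \<Longrightarrow> \<not> x < len s \<Longrightarrow> s x = None"
  using seqs_dom by blast

lemma restr_mono_le: "i \<le> j \<Longrightarrow> restr s i \<subseteq>\<^sub>m restr s j"
  by (auto simp: restr_def map_le_def)

lemma comparable_restr: "restr s i \<subseteq>\<^sub>m restr s j \<or> restr s j \<subseteq>\<^sub>m restr s i"
  by (meson linear restr_mono_le)

lemma comparable_below: "x \<in> seqs \<Longrightarrow> y \<in> seqs \<Longrightarrow> s \<in> seqs \<Longrightarrow> x \<subseteq>\<^sub>m s \<Longrightarrow> y \<subseteq>\<^sub>m s \<Longrightarrow> x \<subseteq>\<^sub>m y \<or> y \<subseteq>\<^sub>m x"
  by (metis comparable_restr map_le_restr)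

lemma nxt_gt: "i < j \<Longrightarrow> i < nxt i"
  unfolding nxt_def by (rule LeastI)

lemma nxt_le: "i < j \<Longrightarrow> nxt i \<le> j"
  unfolding nxt_def by (rule Least_le)

lemma less_nxt_iff: "i < j \<Longrightarrow> x < nxt i \<longleftrightarrow> x \<le> i"
  by (metis leD le_less_trans linorder_le_less_linear nxt_gt nxt_le)


lemma ext1_props:
  assumes s: "s \<in> seqs" and j: "len s < j"
  shows "ext1 s a \<in> seqs" "len (ext1 s a) = nxt (len s)" "s \<subseteq>\<^sub>m ext1 s a"
    "restr (ext1 s a) (len s) = s" "ext1 s a (len s) = Some a" "len s < len (ext1 s a)"
proof -
  have d: "dom (ext1 s a) = {..<nxt (len s)}"
    using s j by (auto simp: ext1_def seqs_dom less_nxt_iff)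
  show "ext1 s a \<in> seqs" using d by (rule in_seqsI)
  show l: "len (ext1 s a) = nxt (len s)" using d by (rule len_eq)
  show "s \<subseteq>\<^sub>m ext1 s a" using s by (auto simp: ext1_def map_le_def seqs_dom)
  show "restr (ext1 s a) (len s) = s" using s
    by (auto simp: ext1_def restr_def restrict_map_def fun_eq_iff seqs_None)
  show "ext1 s a (len s) = Some a" by (simp add: ext1_def)
  show "len s < len (ext1 s a)" using l j nxt_gt by simp
qed

lemma restr_nxt:
  assumes t: "t \<in> seqs" and i: "i < len t" and b: "t i = Some b"
  shows "restr t (nxt i) = ext1 (restr t i) b"
proof -
  have li: "len (restr t i) = i" using t i by (simp add: len_restr)
  show ?thesis
    using i b unfolding ext1_def li
    by (auto simp: restr_def restrict_map_def fun_eq_iff less_nxt_iff)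
qed




lemma deg_mono: "q \<subseteq> p \<Longrightarrow> deg q x \<subseteq> deg p x"
  unfolding deg_def by blast

lemma deg_le:
  assumes x: "x \<in> seqs" and y: "y \<in> seqs" and le: "x \<subseteq>\<^sub>m y"
  shows "deg p x \<subseteq> deg p y"
proof
  fix i assume "i \<in> deg p x"
  then obtain t where i: "i < len x" and t: "t \<in> p" "restr t i = restr x i" "i \<in> dom t" "t i \<noteq> x i"
    unfolding deg_def by blast
  have xr: "x = restr y (len x)" using map_le_restr[OF x y le] .
  have "restr x i = restr (restr y (len x)) i" using xr by simp
  also have "\<dots> = restr y i" using i by (simp add: restr_restr min_absorb2 less_imp_le)
  finally have "restr x i = restr y i" .
  moreover have "x i = y i" using i xr unfolding restr_def by (metis lessThan_iff restrict_in)
  moreover have "i < len y" using i map_le_len[OF x y le] by simp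
  ultimately show "i \<in> deg p y" using t unfolding deg_def by auto
qed

lemma deg_split:
  assumes x: "x \<in> seqs" and i: "i < len x" and e: "ext1 (restr x i) b \<in> q" and ne: "x i \<noteq> Some b"
  shows "i \<in> deg q x"
proof -
  have rs: "restr x i \<in> seqs" using x by (rule restr_seqs)
  have li: "len (restr x i) = i" using x i by (simp add: len_restr)
  have j: "len (restr x i) < len x" using li i by simp
  note E = ext1_props[OF rs j, of b]
  show ?thesis unfolding deg_def
    using i e ne E(4,5) li by (auto intro!: bexI[of _ "ext1 (restr x i) b"])
qed

lemma deg_split_conv:
  assumes p: "subtree p" and x: "x \<in> seqs" and i: "i \<in> deg p x"
  shows "\<exists>b. ext1 (restr x i) b \<in> p \<and> x i \<noteq> Some b"
proof -
  obtain t where t: "t \<in> p" "restr t i = restr x i" "i \<in> dom t" "t i \<noteq> x i"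
    using i unfolding deg_def by blast
  then obtain b where b: "t i = Some b" by blast
  have ts: "t \<in> seqs" using p t(1) unfolding subtree_def by blast
  have il: "i < len t" using t(3) seqs_dom[OF ts] by blast
  have "restr t (nxt i) = ext1 (restr t i) b" using restr_nxt[OF ts il b] .
  moreover have "restr t (nxt i) \<in> p" using p t(1) unfolding subtree_def by blast
  ultimately show ?thesis using t b by auto
qed

lemma deg_transfer:
  assumes p: "subtree p" and x: "x \<in> seqs" and i: "i \<in> deg p x"
    and su: "succs q (restr x i) = succs p (restr x i)"
  shows "i \<in> deg q x"
proof -
  obtain b where b: "ext1 (restr x i) b \<in> p" "x i \<noteq> Some b" using deg_split_conv[OF p x i] by blast
  have "b \<in> succs q (restr x i)" using su b(1) by (simp add: succs_def)
  hence "ext1 (restr x i) b \<in> q" by (simp add: succs_def)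
  moreover have "i < len x" using i unfolding deg_def by blast
  ultimately show ?thesis using deg_split[OF x _ _ b(2)] by blast
qed

lemma Field_Restr_kord: "Field (Restr (kord::'k::wellorder rel) X) = X"
  by (auto simp: Field_def kord_def)

lemma WO_kord: "Well_order (kord :: 'k::wellorder rel)"
proof -
  have f: "Field (kord :: 'k rel) = UNIV" by (auto simp: Field_def kord_def)
  have "kord - Id = {(x::'k, y). x < y}" by (auto simp: kord_def)
  hence w: "wf ((kord :: 'k rel) - Id)" using wellorder_class.wf by simp
  show ?thesis unfolding well_order_on_def linear_order_on_def partial_order_on_def preorder_on_def
    using w f by (auto simp: refl_on_def trans_def antisym_def total_on_def kord_def)
qed

lemma strict_mono_ge:
  fixes \<phi> :: "'k::wellorder \<Rightarrow> 'k"
  assumes into: "\<forall>x\<in>A. \<phi> x \<in> A" and sm: "\<forall>x\<in>A. \<forall>y\<in>A. x < y \<longrightarrow> \<phi> x < \<phi> y"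
  shows "x \<in> A \<Longrightarrow> x \<le> \<phi> x"
proof (induction x rule: less_induct)
  case (less x)
  show ?case
  proof (rule ccontr)
    assume "\<not> x \<le> \<phi> x"
    hence lt: "\<phi> x < x" by simp
    have A: "\<phi> x \<in> A" using into less.prems by blast
    have "\<phi> x \<le> \<phi> (\<phi> x)" using less.IH[OF lt A] .
    moreover have "\<phi> (\<phi> x) < \<phi> x" using sm A less.prems lt by blast
    ultimately show False by simp
  qed
qed

lemma embed_ordLeq:
  fixes A B :: "'k::wellorder set"
  assumes into: "\<forall>x\<in>A. g x \<in> B" and sm: "\<forall>x\<in>A. \<forall>y\<in>A. x < y \<longrightarrow> g x < g y"
  shows "Restr kord A \<le>o Restr kord B"
proof (rule ccontr)
  assume nle: "\<not> Restr kord A \<le>o Restr kord B"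
  have WA: "Well_order (Restr kord A)" and WB: "Well_order (Restr kord B)"
    using Well_order_Restr[OF WO_kord] by blast+
  have "Restr kord B <o Restr kord A" using not_ordLeq_iff_ordLess[OF WB WA] nle by blast
  then obtain a where a: "a \<in> Field (Restr kord A)"
    and iso: "Restr kord B =o Restr (Restr kord A) (underS (Restr kord A) a)"
    using ordLess_iff_ordIso_Restr[OF WA WB] by blast
  have aA: "a \<in> A" using a Field_Restr_kord by blast
  define U where "U = {b\<in>A. b < a}"
  have U: "underS (Restr kord A) a = U" using aA by (auto simp: underS_def U_def kord_def)
  have R: "Restr (Restr kord A) U = Restr kord U" by (rule Restr_subset) (auto simp: U_def)
  obtain h where h: "iso (Restr kord B) (Restr kord U) h"
    using iso unfolding U R ordIso_def by blast
  have bij: "bij_betw h B U" and pres: "\<forall>b\<in>B. \<forall>b'\<in>B. (b, b') \<in> Restr kord B \<longleftrightarrow> (h b, h b') \<in> Restr kord U"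
    using h unfolding iso_iff2 Field_Restr_kord by blast+
  have hU: "\<forall>b\<in>B. h b \<in> U" using bij by (auto simp: bij_betw_def)
  have inj: "inj_on h B" using bij by (auto simp: bij_betw_def)
  have into2: "\<forall>x\<in>A. h (g x) \<in> A" using hU into by (auto simp: U_def)
  have sm2: "\<forall>x\<in>A. \<forall>y\<in>A. x < y \<longrightarrow> h (g x) < h (g y)"
  proof (intro ballI impI)
    fix x y assume xy: "x \<in> A" "y \<in> A" "x < y"
    have gl: "g x < g y" using sm xy by blast
    have gB: "g x \<in> B" "g y \<in> B" using into xy by blast+
    have "(g x, g y) \<in> Restr kord B" using gl gB by (auto simp: kord_def)
    hence "h (g x) \<le> h (g y)" using pres gB by (auto simp: kord_def)
    moreover have "h (g x) \<noteq> h (g y)" using inj gB gl by (metis inj_on_contraD less_irrefl)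
    ultimately show "h (g x) < h (g y)" by simp
  qed
  have "a \<le> h (g a)" using strict_mono_ge[OF into2 sm2 aA] .
  moreover have "h (g a) < a" using hU into aA by (auto simp: U_def)
  ultimately show False by simp
qed

lemma otp_mono: "A \<subseteq> B \<Longrightarrow> otp_less B \<zeta> \<Longrightarrow> otp_less A \<zeta>"
  unfolding otp_less_def
  using embed_ordLeq[of A id B] ordLeq_ordLess_trans by fastforce

lemma otp_embed:
  fixes \<pi> :: "'k::wellorder \<Rightarrow> 'k"
  assumes into: "\<forall>\<xi><\<zeta>. \<pi> \<xi> \<in> A" and sm: "\<forall>\<xi> \<eta>. \<xi> < \<eta> \<longrightarrow> \<eta> < \<zeta> \<longrightarrow> \<pi> \<xi> < \<pi> \<eta>"
  shows "\<not> otp_less A \<zeta>"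
proof -
  have "Restr kord {..<\<zeta>} \<le>o Restr kord A"
    by (rule embed_ordLeq[of _ \<pi>]) (use into sm in auto)
  thus ?thesis unfolding otp_less_def using not_ordLess_ordLeq by blast
qed



lemma bounded_image:
  fixes f :: "'k::wellorder \<Rightarrow> 'k"
  assumes co: "card_order (kord::'k rel)" and reg: "regularCard (kord::'k rel)"
  shows "\<exists>M. \<forall>\<eta><\<xi>. f \<eta> \<le> M"
proof (rule ccontr)
  assume nb: "\<not> (\<exists>M. \<forall>\<eta><\<xi>. f \<eta> \<le> M)"
  have F: "Field (kord::'k rel) = UNIV" by (auto simp: Field_def kord_def)
  let ?K = "f ` {..<\<xi>}"
  have cof: "cofinal ?K kord"
    unfolding cofinal_def
  proof
    fix a :: 'k
    obtain \<eta> where "\<eta> < \<xi>" "\<not> f \<eta> \<le> a" using nb by blast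
    thus "\<exists>b\<in>?K. a \<noteq> b \<and> (a, b) \<in> kord" by (auto simp: kord_def)
  qed
  have iso: "|?K| =o (kord::'k rel)" using reg cof F unfolding regularCard_def by blast
  have CO: "Card_order (kord::'k rel)" using co F by simp
  have u: "underS kord \<xi> = {..<\<xi>}" by (auto simp: underS_def kord_def)
  have "|{..<\<xi>}| <o (kord::'k rel)" using card_of_underS[OF CO, of \<xi>] F u by simp
  hence "|?K| <o (kord::'k rel)" using card_of_image ordLeq_ordLess_trans by blast
  thus False using iso not_ordLess_ordIso by blast
qed

definition lub :: "('k \<rightharpoonup> 'k) set \<Rightarrow> ('k \<rightharpoonup> 'k)" where
  "lub C = (\<lambda>x. if \<exists>c\<in>C. x \<in> dom c then (SOME c. c \<in> C \<and> x \<in> dom c) x else None)"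

definition is_chain :: "('k \<rightharpoonup> 'k) set \<Rightarrow> bool" where
  "is_chain C \<longleftrightarrow> (\<forall>a\<in>C. \<forall>b\<in>C. a \<subseteq>\<^sub>m b \<or> b \<subseteq>\<^sub>m a)"

lemma dom_lub: "dom (lub C) = (\<Union>c\<in>C. dom c)"
proof -
  have "x \<in> dom (lub C) \<longleftrightarrow> (\<exists>c\<in>C. x \<in> dom c)" for x
  proof
    assume a: "\<exists>c\<in>C. x \<in> dom c"
    define c0 where "c0 = (SOME c. c \<in> C \<and> x \<in> dom c)"
    have "\<exists>c. c \<in> C \<and> x \<in> dom c" using a by blast
    hence "c0 \<in> C \<and> x \<in> dom c0" unfolding c0_def by (rule someI_ex)
    moreover have "lub C x = c0 x" using a unfolding lub_def c0_def by simp
    ultimately show "x \<in> dom (lub C)" by (simp add: domIff)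
  next
    assume "x \<in> dom (lub C)"
    thus "\<exists>c\<in>C. x \<in> dom c" unfolding lub_def by (simp add: domIff split: if_splits)
  qed
  thus ?thesis by (simp add: set_eq_iff)
qed

lemma lub_ge: "is_chain C \<Longrightarrow> c \<in> C \<Longrightarrow> c \<subseteq>\<^sub>m lub C"
  unfolding map_le_def
proof
  fix x assume ch: "is_chain C" and c: "c \<in> C" and x: "x \<in> dom c"
  let ?c = "SOME c. c \<in> C \<and> x \<in> dom c"
  have "\<exists>c. c \<in> C \<and> x \<in> dom c" using c x by blast
  hence s: "?c \<in> C \<and> x \<in> dom ?c" by (rule someI_ex)
  have "lub C x = ?c x" unfolding lub_def using c x by auto
  also have "\<dots> = c x" using map_le_agree[of ?c c x] ch s c x unfolding is_chain_def by blast
  finally show "c x = lub C x" by simp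
qed

lemma GC:
  fixes r :: "('k::wellorder \<rightharpoonup> 'k) set"
  assumes co: "card_order (kord::'k rel)" and reg: "regularCard (kord::'k rel)"
   and sub: "subtree r"
   and lim: "\<forall>\<delta> s. is_limit \<delta> \<longrightarrow> dom s = {..<\<delta>} \<longrightarrow> (\<forall>\<alpha><\<delta>. restr s \<alpha> \<in> r) \<longrightarrow> s \<in> r"
   and w0: "w0 \<in> r" and N: "\<forall>w\<in>r. N w \<in> r \<and> w \<subseteq>\<^sub>m N w"
  shows "\<exists>B. \<forall>\<xi>::'k. B \<xi> \<in> r \<and> w0 \<subseteq>\<^sub>m B \<xi> \<and> (\<forall>\<eta><\<xi>. N (B \<eta>) \<subseteq>\<^sub>m B \<xi>)"
proof -
  have rs: "r \<subseteq> seqs" and rr: "\<And>s i. s \<in> r \<Longrightarrow> restr s i \<in> r" using sub unfolding subtree_def by blast+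
  define R where "R = {(x::'k, y). x < y}"
  have wfR: "wf R" unfolding R_def by (rule wellorder_class.wf)
  define H where "H = (\<lambda>g (\<xi>::'k). N (lub (insert w0 (g ` {..<\<xi>}))))"
  define G where "G = wfrec R H"
  define B where "B = (\<lambda>\<xi>. lub (insert w0 (G ` {..<\<xi>})))"
  have GB: "G \<xi> = N (B \<xi>)" for \<xi>
  proof -
    have "G \<xi> = H (cut G R \<xi>) \<xi>" unfolding G_def by (rule wfrec[OF wfR])
    moreover have "cut G R \<xi> ` {..<\<xi>} = G ` {..<\<xi>}"
      by (auto simp: cut_apply R_def image_def)
    ultimately show ?thesis unfolding H_def B_def by simp
  qed
  have inv: "B \<xi> \<in> r \<and> w0 \<subseteq>\<^sub>m B \<xi> \<and> (\<forall>\<eta><\<xi>. G \<eta> \<subseteq>\<^sub>m B \<xi>)" for \<xi>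
  proof (induction \<xi> rule: less_induct)
    case (less \<xi>)
    let ?C = "insert w0 (G ` {..<\<xi>})"
    have Gr: "G \<eta> \<in> r" and BG: "B \<eta> \<subseteq>\<^sub>m G \<eta>" if "\<eta> < \<xi>" for \<eta>
      using less.IH[OF that] N GB by auto
    have Cr: "?C \<subseteq> r" using w0 Gr by auto
    have ch: "is_chain ?C"
    proof -
      have a: "w0 \<subseteq>\<^sub>m G \<eta>" if "\<eta> < \<xi>" for \<eta>
        using less.IH[OF that] BG[OF that] map_le_trans by blast
      have b: "G \<eta> \<subseteq>\<^sub>m G \<eta>'" if "\<eta> < \<eta>'" "\<eta>' < \<xi>" for \<eta> \<eta>'
        using less.IH[OF that(2)] that BG[OF that(2)] map_le_trans by blast
      have "G \<eta> \<subseteq>\<^sub>m G \<eta>' \<or> G \<eta>' \<subseteq>\<^sub>m G \<eta>" if "\<eta> < \<xi>" "\<eta>' < \<xi>" for \<eta> \<eta>'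
        using b that by (metis linorder_neqE map_le_refl)
      thus ?thesis unfolding is_chain_def using a by auto
    qed
    obtain M where M: "\<forall>\<eta><\<xi>. len (G \<eta>) \<le> M" using bounded_image[OF co reg, where f="\<lambda>\<eta>. len (G \<eta>)" and \<xi>=\<xi>] by blast
    define M' where "M' = max M (len w0)"
    have lenC: "c \<in> ?C \<Longrightarrow> len c \<le> M'" for c using M by (auto simp: M'_def le_max_iff_disj)
    let ?l = "lub ?C"
    have domC: "dom ?l = (\<Union>c\<in>?C. {..<len c})"
      unfolding dom_lub using Cr rs seqs_dom by (auto, blast+)
    have nM: "M' \<notin> dom ?l" using domC lenC by (auto dest: leD)
    define \<delta> where "\<delta> = (LEAST x. x \<notin> dom ?l)"
    have dnot: "\<delta> \<notin> dom ?l" unfolding \<delta>_def using nM by (rule LeastI)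
    have dl: "dom ?l = {..<\<delta>}"
    proof
      show "{..<\<delta>} \<subseteq> dom ?l" unfolding \<delta>_def using not_less_Least by blast
      show "dom ?l \<subseteq> {..<\<delta>}"
      proof
        fix x assume "x \<in> dom ?l"
        then obtain c where c: "c \<in> ?C" "x < len c" using domC by blast
        show "x \<in> {..<\<delta>}"
        proof (rule ccontr)
          assume "x \<notin> {..<\<delta>}"
          hence "\<delta> < len c" using c by (auto simp: not_less)
          hence "\<delta> \<in> dom ?l" using domC c by blast
          thus False using dnot by blast
        qed
      qed
    qed
    have ge: "c \<in> ?C \<Longrightarrow> c \<subseteq>\<^sub>m ?l" for c using lub_ge[OF ch] .
    have ls: "?l \<in> seqs" using dl by (rule in_seqsI)
    have rest: "\<forall>\<alpha><\<delta>. restr ?l \<alpha> \<in> r"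
    proof (intro allI impI)
      fix \<alpha> assume "\<alpha> < \<delta>"
      then obtain c where c: "c \<in> ?C" "\<alpha> < len c" using dl domC by blast
      have cs: "c \<in> seqs" using c Cr rs by blast
      have e: "c = restr ?l (len c)" using map_le_restr[OF cs ls ge[OF c(1)]] .
      have "restr (restr ?l (len c)) \<alpha> = restr ?l \<alpha>" using c(2) by (simp add: restr_restr min_absorb2 less_imp_le)
      hence "restr c \<alpha> = restr ?l \<alpha>" using e by metis
      thus "restr ?l \<alpha> \<in> r" using rr c Cr by (metis subsetD)
    qed
    have lr: "?l \<in> r"
    proof (cases "is_limit \<delta>")
      case True thus ?thesis using lim dl rest by blast
    next
      case False
      then consider "\<not> (\<exists>\<beta>. \<beta> < \<delta>)" | \<beta> where "\<beta> < \<delta>" "\<forall>\<beta>'. \<beta> < \<beta>' \<longrightarrow> \<not> \<beta>' < \<delta>"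
        unfolding is_limit_def by blast
      thus ?thesis
      proof cases
        case 1
        have "?l = restr w0 \<delta>" using 1 dl
          by (auto simp: restr_def fun_eq_iff restrict_map_def)
        thus ?thesis using rr w0 by simp
      next
        case 2
        then obtain c where c: "c \<in> ?C" "\<beta> < len c" using dl domC by blast
        have cs: "c \<in> seqs" using c Cr rs by blast
        have "?l = restr c \<delta>"
        proof
          fix x show "?l x = restr c \<delta> x"
          proof (cases "x < \<delta>")
            case True
            hence "x \<le> \<beta>" using 2 by (metis leI)
            hence xc: "x \<in> dom c" using c seqs_dom[OF cs] by auto
            have "?l x = c x" using ge[OF c(1)] xc by (auto simp: map_le_def)
            thus ?thesis using True by (simp add: restr_def)
          next
            case False
            hence "?l x = None" using dl by auto
            thus ?thesis using False by (simp add: restr_def)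
          qed
        qed
        thus ?thesis using rr c Cr by (metis subsetD)
      qed
    qed
    show ?case unfolding B_def using lr ge by auto
  qed
  have "\<forall>\<xi>. B \<xi> \<in> r \<and> w0 \<subseteq>\<^sub>m B \<xi> \<and> (\<forall>\<eta><\<xi>. N (B \<eta>) \<subseteq>\<^sub>m B \<xi>)"
  proof
    fix \<xi>
    have "N (B \<eta>) = G \<eta>" for \<eta> using GB by simp
    thus "B \<xi> \<in> r \<and> w0 \<subseteq>\<^sub>m B \<xi> \<and> (\<forall>\<eta><\<xi>. N (B \<eta>) \<subseteq>\<^sub>m B \<xi>)" using inv[of \<xi>] by simp
  qed
  thus ?thesis by blast
qed



lemma PF_D:
  assumes "p \<in> PF F"
  shows "subtree p" "p \<subseteq> seqs" "\<And>s i. s \<in> p \<Longrightarrow> restr s i \<in> p"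
    "\<And>\<alpha>. \<exists>s\<in>p. \<alpha> < len s"
    "\<And>s. s \<in> p \<Longrightarrow> \<exists>t. s \<subseteq>\<^sub>m t \<and> t \<in> p \<and> succs p t \<in> F"
    "\<And>s. s \<in> p \<Longrightarrow> (\<exists>\<alpha>. succs p s = {\<alpha>}) \<or> succs p s \<in> F"
    "\<forall>\<delta> s. is_limit \<delta> \<longrightarrow> dom s = {..<\<delta>} \<longrightarrow> (\<forall>\<alpha><\<delta>. restr s \<alpha> \<in> p) \<longrightarrow> s \<in> p"
    "\<And>s. s \<in> p \<Longrightarrow> closed_in (deg p s) (len s)"
  using assms unfolding PF_def subtree_def F_splitting_def by blast+

lemma PF_I:
  assumes "subtree p" "\<forall>\<alpha>. \<exists>s\<in>p. \<alpha> < len s"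
    "\<forall>s\<in>p. \<exists>t. s \<subseteq>\<^sub>m t \<and> t \<in> p \<and> succs p t \<in> F"
    "\<forall>s\<in>p. (\<exists>\<alpha>. succs p s = {\<alpha>}) \<or> succs p s \<in> F"
    "\<forall>\<delta> s. is_limit \<delta> \<longrightarrow> dom s = {..<\<delta>} \<longrightarrow> (\<forall>\<alpha><\<delta>. restr s \<alpha> \<in> p) \<longrightarrow> s \<in> p"
    "\<forall>s\<in>p. closed_in (deg p s) (len s)"
  shows "p \<in> PF F"
  using assms unfolding PF_def F_splitting_def by blast

lemma filter_ne: "is_filter F \<Longrightarrow> A \<in> F \<Longrightarrow> \<exists>a. a \<in> A"
  unfolding is_filter_def by (metis ex_in_conv)

lemma filter_up: "is_filter F \<Longrightarrow> A \<in> F \<Longrightarrow> A \<subseteq> B \<Longrightarrow> B \<in> F"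
  unfolding is_filter_def by blast

lemma succs_ne:
  assumes "p \<in> PF F" "is_filter F" "s \<in> p"
  shows "\<exists>\<alpha>. ext1 s \<alpha> \<in> p"
  using PF_D(6)[OF assms(1,3)] filter_ne[OF assms(2)] unfolding succs_def by blast

lemma PF_longer:
  assumes "p \<in> PF F" "s \<in> p"
  shows "\<exists>j. len s < j"
  using PF_D(4)[OF assms(1), of "len s"] by blast

lemma PF_ext1:
  assumes p: "p \<in> PF F" and s: "s \<in> p"
  shows "ext1 s a \<in> seqs" "len (ext1 s a) = nxt (len s)" "s \<subseteq>\<^sub>m ext1 s a"
    "restr (ext1 s a) (len s) = s" "ext1 s a (len s) = Some a" "len s < len (ext1 s a)"
proof -
  obtain j where j: "len s < j" using PF_longer[OF p s] by blast
  have ss: "s \<in> seqs" using PF_D(2)[OF p] s by blast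
  show "ext1 s a \<in> seqs" "len (ext1 s a) = nxt (len s)" "s \<subseteq>\<^sub>m ext1 s a"
    "restr (ext1 s a) (len s) = s" "ext1 s a (len s) = Some a" "len s < len (ext1 s a)"
    using ext1_props[OF ss j] by blast+
qed

lemma ext_long:
  fixes r :: "('k::wellorder \<rightharpoonup> 'k) set"
  assumes co: "card_order (kord::'k rel)" and reg: "regularCard (kord::'k rel)"
    and filt: "is_filter F" and r: "r \<in> PF F" and w: "w \<in> r"
  shows "\<exists>z\<in>r. w \<subseteq>\<^sub>m z \<and> \<alpha> < len z"
proof -
  have rs: "r \<subseteq> seqs" using PF_D(2)[OF r] .
  have "\<forall>w\<in>r. \<exists>z. z \<in> r \<and> w \<subseteq>\<^sub>m z \<and> len w < len z"
  proof
    fix w assume w: "w \<in> r"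
    obtain t where t: "w \<subseteq>\<^sub>m t" "t \<in> r" "succs r t \<in> F" using PF_D(5)[OF r w] by blast
    obtain a where a: "ext1 t a \<in> r" using succs_ne[OF r filt t(2)] by blast
    have "len w \<le> len t" using map_le_len t w rs by blast
    thus "\<exists>z. z \<in> r \<and> w \<subseteq>\<^sub>m z \<and> len w < len z"
      using a PF_ext1(3,6)[OF r t(2), of a] t(1) map_le_trans by (metis le_less_trans)
  qed
  then obtain N where N: "\<forall>w\<in>r. N w \<in> r \<and> w \<subseteq>\<^sub>m N w \<and> len w < len (N w)"
    by metis
  obtain B where B: "\<forall>\<xi>::'k. B \<xi> \<in> r \<and> w \<subseteq>\<^sub>m B \<xi> \<and> (\<forall>\<eta><\<xi>. N (B \<eta>) \<subseteq>\<^sub>m B \<xi>)"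
    using GC[OF co reg PF_D(1)[OF r] PF_D(7)[OF r] w, of N] N by blast
  have sm: "\<forall>x\<in>UNIV. \<forall>y\<in>UNIV. x < y \<longrightarrow> len (B x) < len (B y)"
  proof (intro ballI impI)
    fix x y :: 'k assume "x < y"
    hence "N (B x) \<subseteq>\<^sub>m B y" using B by blast
    hence "len (N (B x)) \<le> len (B y)" using map_le_len B N rs by blast
    moreover have "len (B x) < len (N (B x))" using N B by blast
    ultimately show "len (B x) < len (B y)" by simp
  qed
  have "\<alpha> \<le> len (B \<alpha>)" using strict_mono_ge[of UNIV "\<lambda>x. len (B x)", OF _ sm] by simp
  moreover have "len (B \<alpha>) < len (N (B \<alpha>))" "N (B \<alpha>) \<in> r" "B \<alpha> \<subseteq>\<^sub>m N (B \<alpha>)" using N B by blast+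
  moreover have "w \<subseteq>\<^sub>m B \<alpha>" using B by blast
  ultimately show ?thesis using map_le_trans by (metis le_less_trans)
qed

definition pr :: "('k \<rightharpoonup> 'k) set \<Rightarrow> ('k \<rightharpoonup> 'k) \<Rightarrow> ('k \<rightharpoonup> 'k) set" where
  "pr p t = {u\<in>p. u \<subseteq>\<^sub>m t \<or> t \<subseteq>\<^sub>m u}"

lemma pr_sub: "pr p t \<subseteq> p" by (auto simp: pr_def)

lemma pr_succs_above:
  assumes p: "p \<in> PF F" and x: "x \<in> p" and tx: "t \<subseteq>\<^sub>m x"
  shows "succs (pr p t) x = succs p x"
  using PF_ext1(3)[OF p x] tx map_le_trans unfolding succs_def pr_def by blast

lemma pr_succs_below:
  assumes p: "p \<in> PF F" and x: "x \<in> p" and t: "t \<in> p" and xt: "x \<subseteq>\<^sub>m t" and ne: "x \<noteq> t"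
  shows "\<exists>\<gamma>. succs (pr p t) x = {\<gamma>}"
proof -
  have ps: "p \<subseteq> seqs" using PF_D(2)[OF p] .
  have xs: "x \<in> seqs" and ts: "t \<in> seqs" using x t ps by blast+
  have xr: "x = restr t (len x)" using map_le_restr[OF xs ts xt] .
  have ll: "len x < len t"
  proof -
    have "len x \<le> len t" using map_le_len[OF xs ts xt] .
    moreover have "len x \<noteq> len t" using xr ne restr_full[OF ts] by (metis order_refl)
    ultimately show ?thesis by simp
  qed
  then obtain \<gamma> where g: "t (len x) = Some \<gamma>" using seqs_dom[OF ts] by blast
  have e: "restr t (nxt (len x)) = ext1 x \<gamma>" using restr_nxt[OF ts ll g] xr by simp
  have "ext1 x \<gamma> \<in> pr p t"
    using PF_D(3)[OF p t, of "nxt (len x)"] e restr_le[of t "nxt (len x)"] unfolding pr_def by auto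
  moreover have "a = \<gamma>" if "ext1 x a \<in> pr p t" for a
  proof -
    have c: "ext1 x a \<subseteq>\<^sub>m t \<or> t \<subseteq>\<^sub>m ext1 x a" using that unfolding pr_def by blast
    have "ext1 x a (len x) = Some a" using PF_ext1(5)[OF p x] .
    moreover have "len x \<in> dom (ext1 x a)" using PF_ext1(5)[OF p x] by blast
    moreover have "len x \<in> dom t" using g by blast
    ultimately have "t (len x) = Some a" using map_le_agree[OF c] by metis
    thus "a = \<gamma>" using g by simp
  qed
  ultimately have "succs (pr p t) x = {\<gamma>}" unfolding succs_def by blast
  thus ?thesis by blast
qed



lemma pr_PF:
  fixes p :: "('k::wellorder \<rightharpoonup> 'k) set"
  assumes co: "card_order (kord::'k rel)" and reg: "regularCard (kord::'k rel)"
    and filt: "is_filter F" and p: "p \<in> PF F" and t: "t \<in> p"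
  shows "pr p t \<in> PF F"
proof (rule PF_I)
  have ps: "p \<subseteq> seqs" using PF_D(2)[OF p] .
  have ts: "t \<in> seqs" using t ps by blast
  let ?q = "pr p t"
  show "subtree ?q"
    unfolding subtree_def
  proof (intro conjI ballI allI)
    show "?q \<noteq> {}" using t unfolding pr_def by auto
    show "?q \<subseteq> seqs" using ps pr_sub by blast
    fix s i assume s: "s \<in> ?q"
    have sp: "s \<in> p" using s pr_sub by blast
    have rp: "restr s i \<in> p" using PF_D(3)[OF p sp] .
    have ss: "s \<in> seqs" using sp ps by blast
    have "restr s i \<subseteq>\<^sub>m t \<or> t \<subseteq>\<^sub>m restr s i"
    proof (cases "s \<subseteq>\<^sub>m t")
      case True thus ?thesis using restr_le map_le_trans by blast
    next
      case False
      hence "t \<subseteq>\<^sub>m s" using s unfolding pr_def by blast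
      thus ?thesis using comparable_below[OF restr_seqs[OF ss] ts ss restr_le] by blast
    qed
    thus "restr s i \<in> ?q" using rp unfolding pr_def by blast
  qed
  show "\<forall>\<alpha>. \<exists>s\<in>?q. \<alpha> < len s"
  proof
    fix \<alpha>
    obtain z where "z \<in> p" "t \<subseteq>\<^sub>m z" "\<alpha> < len z" using ext_long[OF co reg filt p t] by blast
    thus "\<exists>s\<in>?q. \<alpha> < len s" unfolding pr_def by blast
  qed
  show "\<forall>s\<in>?q. \<exists>t'. s \<subseteq>\<^sub>m t' \<and> t' \<in> ?q \<and> succs ?q t' \<in> F"
  proof
    fix s assume s: "s \<in> ?q"
    define b where "b = (if s \<subseteq>\<^sub>m t then t else s)"
    have b: "b \<in> p" "t \<subseteq>\<^sub>m b" "s \<subseteq>\<^sub>m b" using s t unfolding b_def pr_def by auto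
    obtain t' where t': "b \<subseteq>\<^sub>m t'" "t' \<in> p" "succs p t' \<in> F" using PF_D(5)[OF p b(1)] by blast
    have tt: "t \<subseteq>\<^sub>m t'" using b(2) t'(1) map_le_trans by blast
    have "t' \<in> ?q" using t'(2) tt unfolding pr_def by blast
    moreover have "succs ?q t' \<in> F" using pr_succs_above[OF p t'(2) tt] t'(3) by simp
    ultimately show "\<exists>t'. s \<subseteq>\<^sub>m t' \<and> t' \<in> ?q \<and> succs ?q t' \<in> F"
      using b(3) t'(1) map_le_trans by blast
  qed
  show "\<forall>s\<in>?q. (\<exists>\<alpha>. succs ?q s = {\<alpha>}) \<or> succs ?q s \<in> F"
  proof
    fix s assume s: "s \<in> ?q"
    have sp: "s \<in> p" using s pr_sub by blast
    show "(\<exists>\<alpha>. succs ?q s = {\<alpha>}) \<or> succs ?q s \<in> F"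
    proof (cases "t \<subseteq>\<^sub>m s")
      case True thus ?thesis using pr_succs_above[OF p sp True] PF_D(6)[OF p sp] by simp
    next
      case False
      hence "s \<subseteq>\<^sub>m t" "s \<noteq> t" using s unfolding pr_def by auto
      thus ?thesis using pr_succs_below[OF p sp t] by blast
    qed
  qed
  show "\<forall>\<delta> s. is_limit \<delta> \<longrightarrow> dom s = {..<\<delta>} \<longrightarrow> (\<forall>\<alpha><\<delta>. restr s \<alpha> \<in> ?q) \<longrightarrow> s \<in> ?q"
  proof (intro allI impI)
    fix \<delta> s assume lim: "is_limit \<delta>" and d: "dom s = {..<\<delta>}" and rs: "\<forall>\<alpha><\<delta>. restr s \<alpha> \<in> ?q"
    have sp: "s \<in> p" using PF_D(7)[OF p] lim d rs pr_sub by blast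
    have ss: "s \<in> seqs" using d by (rule in_seqsI)
    have ls: "len s = \<delta>" using d by (rule len_eq)
    show "s \<in> ?q"
    proof (cases "len t < \<delta>")
      case True
      have r: "restr s (len t) \<in> ?q" using rs True by blast
      have lr: "len (restr s (len t)) = len t" using len_restr[OF ss] ls True by simp
      have "t \<subseteq>\<^sub>m s"
      proof (cases "restr s (len t) \<subseteq>\<^sub>m t")
        case True
        have "restr s (len t) = restr t (len t)"
          using map_le_restr[OF restr_seqs[OF ss] ts True] lr by simp
        hence "restr s (len t) = t" using restr_full[OF ts] by simp
        thus ?thesis using restr_le by metis
      next
        case False
        hence "t \<subseteq>\<^sub>m restr s (len t)" using r unfolding pr_def by blast
        thus ?thesis using restr_le map_le_trans by blast
      qed
      thus ?thesis using sp unfolding pr_def by blast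
    next
      case False
      have "s \<subseteq>\<^sub>m t"
        unfolding map_le_def
      proof
        fix x assume x: "x \<in> dom s"
        hence xd: "x < \<delta>" using d by blast
        then obtain \<alpha> where a: "x < \<alpha>" "\<alpha> < \<delta>" using lim unfolding is_limit_def by blast
        have c: "restr s \<alpha> \<subseteq>\<^sub>m t \<or> t \<subseteq>\<^sub>m restr s \<alpha>" using rs a(2) unfolding pr_def by blast
        have "x \<in> dom (restr s \<alpha>)" using x a by (simp add: restr_def)
        moreover have "x \<in> dom t" using xd False seqs_dom[OF ts] by auto
        ultimately have "restr s \<alpha> x = t x" using map_le_agree[OF c] by blast
        thus "s x = t x" using a by (simp add: restr_def)
      qed
      thus ?thesis using sp unfolding pr_def by blast
    qed
  qed
  show "\<forall>x\<in>?q. closed_in (deg ?q x) (len x)"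
  proof
    fix x assume x: "x \<in> ?q"
    have xp: "x \<in> p" using x pr_sub by blast
    have xs: "x \<in> seqs" using xp ps by blast
    show "closed_in (deg ?q x) (len x)"
    proof (cases "x \<subseteq>\<^sub>m t")
      case True
      have "deg ?q x = {}"
      proof (rule ccontr)
        assume "deg ?q x \<noteq> {}"
        then obtain i w where i: "i < len x" and w: "w \<in> ?q" "restr w i = restr x i" "i \<in> dom w" "w i \<noteq> x i"
          unfolding deg_def by blast
        have ix: "i \<in> dom x" using i seqs_dom[OF xs] by blast
        have it: "i \<in> dom t" using ix True map_le_implies_dom_le by blast
        have "x i = t i" using map_le_agree[of x t i] True ix it by blast
        moreover have "w i = t i" using map_le_agree[of w t i] w(1,3) it unfolding pr_def by blast
        ultimately show False using w(4) by simp
      qed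
      thus ?thesis unfolding closed_in_def is_limit_def by auto
    next
      case False
      hence tx: "t \<subseteq>\<^sub>m x" using x unfolding pr_def by blast
      have txr: "t = restr x (len t)" using map_le_restr[OF ts xs tx] .
      have D1: "i \<in> deg p x \<and> len t \<le> i" if iq: "i \<in> deg ?q x" for i
      proof
        show "i \<in> deg p x" using iq deg_mono[OF pr_sub] by blast
        show "len t \<le> i"
        proof (rule ccontr)
          assume "\<not> len t \<le> i"
          hence it: "i \<in> dom t" using seqs_dom[OF ts] by auto
          obtain w where w: "w \<in> ?q" "restr w i = restr x i" "i \<in> dom w" "w i \<noteq> x i"
            using iq unfolding deg_def by blast
          have "w i = t i" using map_le_agree[of w t i] w(1,3) it unfolding pr_def by blast
          moreover have "x i = t i" using map_le_agree[of x t i] tx it map_le_implies_dom_le by blast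
          ultimately show False using w(4) by simp
        qed
      qed
      have D2: "i \<in> deg ?q x" if ip: "i \<in> deg p x" "len t \<le> i" for i
      proof -
        obtain w where w: "i < len x" "w \<in> p" "restr w i = restr x i" "i \<in> dom w" "w i \<noteq> x i"
          using ip(1) unfolding deg_def by blast
        have "restr (restr x i) (len t) = t" using txr ip(2) by (simp add: restr_restr min_absorb2)
        hence "restr w (len t) = t" using w(3) ip(2) by (metis restr_restr min_absorb2)
        hence "t \<subseteq>\<^sub>m w" using restr_le by metis
        hence "w \<in> ?q" using w(2) unfolding pr_def by blast
        thus ?thesis using w unfolding deg_def by blast
      qed
      show ?thesis
        unfolding closed_in_def
      proof (intro allI impI)
        fix \<gamma> assume g: "\<gamma> < len x" and lc: "is_limit \<gamma> \<and> (\<forall>\<beta><\<gamma>. \<exists>i\<in>deg ?q x. \<beta> < i \<and> i < \<gamma>)"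
        have "\<forall>\<beta><\<gamma>. \<exists>i\<in>deg p x. \<beta> < i \<and> i < \<gamma>" using lc D1 by blast
        hence gd: "\<gamma> \<in> deg p x" using PF_D(8)[OF p xp] g lc unfolding closed_in_def by blast
        obtain \<beta> where "\<beta> < \<gamma>" using lc unfolding is_limit_def by blast
        then obtain i where "i \<in> deg ?q x" "i < \<gamma>" using lc by blast
        hence "len t \<le> \<gamma>" using D1 by (meson less_imp_le order_trans)
        thus "\<gamma> \<in> deg ?q x" using D2 gd by blast
      qed
    qed
  qed
qed



lemma leave_node:
  fixes r :: "('k::wellorder \<rightharpoonup> 'k) set"
  assumes filt: "is_filter F" and r: "r \<in> PF F" and sub: "r \<subseteq> p" and p: "subtree p"
    and w: "w \<in> r" and t: "t \<in> p" and wt: "w \<subseteq>\<^sub>m t" and tn: "t \<notin> r"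
  shows "\<exists>u. u \<in> r \<and> w \<subseteq>\<^sub>m u \<and> (\<exists>a b. a \<noteq> b \<and> ext1 u a \<in> r \<and> ext1 u b \<in> p)"
proof -
  have ts: "t \<in> seqs" using t p unfolding subtree_def by blast
  have ws: "w \<in> seqs" using w PF_D(2)[OF r] by blast
  define j where "j = (LEAST j. restr t j \<notin> r)"
  have ex: "restr t (len t) \<notin> r" using restr_full[OF ts] tn by simp
  have jn: "restr t j \<notin> r" unfolding j_def using ex by (rule LeastI)
  have jl: "j \<le> len t" unfolding j_def using ex by (rule Least_le)
  have below: "restr t k \<in> r" if "k < j" for k using not_less_Least[of k "\<lambda>j. restr t j \<notin> r"] that unfolding j_def by blast
  have wr: "restr t (len w) = w" using map_le_restr[OF ws ts wt] by simp
  have wj: "len w < j"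
  proof (rule ccontr)
    assume "\<not> len w < j"
    hence e1: "restr (restr t (len w)) j = restr t j" by (simp add: restr_restr min_absorb2)
    hence "restr t j = restr w j" using wr by simp
    thus False using jn PF_D(3)[OF r w, of j] by simp
  qed
  have nl: "\<not> is_limit j"
  proof
    assume lim: "is_limit j"
    have d: "dom (restr t j) = {..<j}" using dom_restr[OF ts] jl by (simp add: min_absorb2)
    have "\<forall>\<alpha><j. restr (restr t j) \<alpha> \<in> r" using below by (simp add: restr_restr min_absorb2 less_imp_le)
    hence "restr t j \<in> r" using PF_D(7)[OF r] lim d by blast
    thus False using jn by simp
  qed
  then obtain i where i: "i < j" "\<forall>\<beta>'. i < \<beta>' \<longrightarrow> \<not> \<beta>' < j" using wj unfolding is_limit_def by blast
  have wi: "len w \<le> i" using i wj by (meson not_le)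
  have it: "i < len t" using i(1) jl by simp
  then obtain b where b: "t i = Some b" using seqs_dom[OF ts] by blast
  have nj: "nxt i = j" using nxt_le[OF i(1)] nxt_gt[OF i(1)] i(2) by (meson le_less)
  define u where "u = restr t i"
  have ur: "u \<in> r" using below[OF i(1)] u_def by simp
  have wu: "w \<subseteq>\<^sub>m u"
  proof -
    have "restr u (len w) = restr t (len w)" using wi by (simp add: u_def restr_restr min_absorb2)
    hence "restr u (len w) = w" using wr by simp
    thus ?thesis using restr_le by metis
  qed
  have eb: "ext1 u b = restr t j" using restr_nxt[OF ts it b] nj u_def by simp
  have ebp: "ext1 u b \<in> p" using eb p t unfolding subtree_def by simp
  obtain a where a: "ext1 u a \<in> r" using succs_ne[OF r filt ur] by blast
  have "a \<noteq> b" using a eb jn by auto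
  thus ?thesis using ur wu a ebp by blast
qed

lemma chain_deg:
  fixes r :: "('k::wellorder \<rightharpoonup> 'k) set"
  assumes co: "card_order (kord::'k rel)" and reg: "regularCard (kord::'k rel)"
    and filt: "is_filter F" and r: "r \<in> PF F" and sub: "r \<subseteq> p" and p: "subtree p"
    and hyp: "\<forall>w\<in>r. \<exists>t\<in>p. w \<subseteq>\<^sub>m t \<and> t \<notin> r"
  shows "\<exists>v\<in>r. \<not> otp_less (deg p v) \<zeta>"
proof -
  have rs: "r \<subseteq> seqs" using PF_D(2)[OF r] .
  have "\<forall>w\<in>r. \<exists>u. u \<in> r \<and> w \<subseteq>\<^sub>m u \<and> (\<exists>a b. a \<noteq> b \<and> ext1 u a \<in> r \<and> ext1 u b \<in> p)"
    using leave_node[OF filt r sub p] hyp by blast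
  then obtain U where U: "\<forall>w\<in>r. U w \<in> r \<and> w \<subseteq>\<^sub>m U w \<and> (\<exists>a b. a \<noteq> b \<and> ext1 (U w) a \<in> r \<and> ext1 (U w) b \<in> p)"
    by (rule bchoice[THEN exE]) blast
  then have "\<forall>w\<in>r. \<exists>a. \<exists>b. a \<noteq> b \<and> ext1 (U w) a \<in> r \<and> ext1 (U w) b \<in> p" by blast
  then obtain A where A: "\<forall>w\<in>r. \<exists>b. A w \<noteq> b \<and> ext1 (U w) (A w) \<in> r \<and> ext1 (U w) b \<in> p"
    by (rule bchoice[THEN exE]) blast
  then obtain Bv where Bv: "\<forall>w\<in>r. A w \<noteq> Bv w \<and> ext1 (U w) (A w) \<in> r \<and> ext1 (U w) (Bv w) \<in> p"
    by (rule bchoice[THEN exE]) blast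
  define N where "N = (\<lambda>w. ext1 (U w) (A w))"
  have N: "\<forall>w\<in>r. N w \<in> r \<and> w \<subseteq>\<^sub>m N w"
  proof
    fix w assume w: "w \<in> r"
    have "U w \<subseteq>\<^sub>m N w" unfolding N_def using PF_ext1(3)[OF r] U w by blast
    thus "N w \<in> r \<and> w \<subseteq>\<^sub>m N w" using U Bv w map_le_trans unfolding N_def by blast
  qed
  obtain w0 where w0: "w0 \<in> r" using PF_D(1)[OF r] unfolding subtree_def by blast
  obtain B where B: "\<forall>\<xi>::'k. B \<xi> \<in> r \<and> w0 \<subseteq>\<^sub>m B \<xi> \<and> (\<forall>\<eta><\<xi>. N (B \<eta>) \<subseteq>\<^sub>m B \<xi>)"
    using GC[OF co reg PF_D(1)[OF r] PF_D(7)[OF r] w0 N] by blast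
  define \<pi> where "\<pi> = (\<lambda>\<xi>. len (U (B \<xi>)))"
  have Ur: "U (B \<xi>) \<in> r" for \<xi> using U B by blast
  have pin: "\<pi> \<xi> \<in> deg p (N (B \<xi>))" for \<xi>
  proof -
    let ?u = "U (B \<xi>)"
    have us: "?u \<in> seqs" using Ur rs by blast
    note E = PF_ext1[OF r Ur[of \<xi>]]
    have x: "N (B \<xi>) \<in> seqs" using E(1) unfolding N_def .
    have "restr (N (B \<xi>)) (len ?u) = ?u" using E(4) unfolding N_def .
    moreover have "ext1 ?u (Bv (B \<xi>)) \<in> p" using Bv B by blast
    moreover have "N (B \<xi>) (len ?u) \<noteq> Some (Bv (B \<xi>))" using E(5) Bv B unfolding N_def by auto
    moreover have "len ?u < len (N (B \<xi>))" using E(6) unfolding N_def .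
    ultimately show ?thesis unfolding \<pi>_def using deg_split[OF x, of "len ?u" "Bv (B \<xi>)" p] by simp
  qed
  have into: "\<forall>\<xi><\<zeta>. \<pi> \<xi> \<in> deg p (B \<zeta>)"
  proof (intro allI impI)
    fix \<xi> assume "\<xi> < \<zeta>"
    hence le: "N (B \<xi>) \<subseteq>\<^sub>m B \<zeta>" using B by blast
    have "N (B \<xi>) \<in> seqs" "B \<zeta> \<in> seqs" using N B rs by blast+
    thus "\<pi> \<xi> \<in> deg p (B \<zeta>)" using deg_le[OF _ _ le] pin by blast
  qed
  have sm: "\<forall>\<xi> \<eta>. \<xi> < \<eta> \<longrightarrow> \<eta> < \<zeta> \<longrightarrow> \<pi> \<xi> < \<pi> \<eta>"
  proof (intro allI impI)
    fix \<xi> \<eta> :: 'k assume "\<xi> < \<eta>"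
    hence le: "N (B \<xi>) \<subseteq>\<^sub>m B \<eta>" using B by blast
    have a: "\<pi> \<xi> < len (N (B \<xi>))" unfolding \<pi>_def N_def using PF_ext1(6)[OF r Ur] .
    have b: "len (N (B \<xi>)) \<le> len (B \<eta>)" using map_le_len le N B rs by blast
    have c: "len (B \<eta>) \<le> \<pi> \<eta>" unfolding \<pi>_def using map_le_len U B rs by blast
    show "\<pi> \<xi> < \<pi> \<eta>" using a b c by simp
  qed
  have "\<not> otp_less (deg p (B \<zeta>)) \<zeta>" using otp_embed[OF into sm] .
  thus ?thesis using B by blast
qed



locale mast =
  fixes F :: "'k::wellorder set set" and D :: "('k \<rightharpoonup> 'k) set set"
    and p :: "('k \<rightharpoonup> 'k) set" and \<zeta> :: 'k and d :: "('k \<rightharpoonup> 'k) \<Rightarrow> ('k \<rightharpoonup> 'k) set"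
  assumes co: "card_order (kord::'k rel)" and reg: "regularCard (kord::'k rel)" and filt: "is_filter F"
    and p: "p \<in> PF F" and DP: "D \<subseteq> PF F" and d: "\<forall>t\<in>p. d t \<in> D \<and> d t \<subseteq> pr p t"
begin

definition small where "small x \<longleftrightarrow> otp_less (deg p x) \<zeta>"
definition L where "L = {s\<in>p. small s}"
definition Fr where "Fr = {s\<in>p. \<not> small s \<and> (\<forall>i<len s. small (restr s i))}"
definition q where "q = L \<union> (\<Union>{d (ext1 s \<alpha>) | s \<alpha>. s \<in> Fr \<and> ext1 s \<alpha> \<in> p})"

lemma ps: "p \<subseteq> seqs" using PF_D(2)[OF p] .
lemma dPF: "t \<in> p \<Longrightarrow> d t \<in> PF F" using d DP by blast
lemma dsub: "t \<in> p \<Longrightarrow> d t \<subseteq> pr p t" using d by blast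
lemma dsubp: "t \<in> p \<Longrightarrow> d t \<subseteq> p" by (rule subset_trans[OF dsub pr_sub])

lemma small_le: "x \<in> seqs \<Longrightarrow> y \<in> seqs \<Longrightarrow> x \<subseteq>\<^sub>m y \<Longrightarrow> small y \<Longrightarrow> small x"
  unfolding small_def by (meson deg_le otp_mono)

lemma small_restr: "x \<in> seqs \<Longrightarrow> small x \<Longrightarrow> small (restr x i)"
  using small_le[OF restr_seqs _ restr_le] by blast

lemma d_contains:
  assumes t: "t \<in> p" shows "t \<in> d t"
proof -
  obtain z where z: "z \<in> d t" "len t < len z" using PF_D(4)[OF dPF[OF t]] by blast
  have zp: "z \<in> pr p t" using z dsub t by blast
  have ts: "t \<in> seqs" and zs: "z \<in> seqs" using t zp pr_sub ps by blast+
  have "t \<subseteq>\<^sub>m z"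
  proof (rule ccontr)
    assume "\<not> t \<subseteq>\<^sub>m z"
    hence "z \<subseteq>\<^sub>m t" using zp unfolding pr_def by blast
    thus False using map_le_len[OF zs ts] z(2) by simp
  qed
  hence "t = restr z (len t)" using map_le_restr[OF ts zs] by blast
  thus ?thesis using PF_D(3)[OF dPF[OF t] z(1)] by metis
qed

lemma frontier:
  assumes v: "v \<in> p" and ns: "\<not> small v"
  shows "\<exists>s\<in>Fr. s \<subseteq>\<^sub>m v"
proof -
  have vs: "v \<in> seqs" using v ps by blast
  define j where "j = (LEAST j. \<not> small (restr v j))"
  have ex: "\<not> small (restr v (len v))" using ns restr_full[OF vs] by simp
  have jn: "\<not> small (restr v j)" unfolding j_def using ex by (rule LeastI)
  have jl: "j \<le> len v" unfolding j_def using ex by (rule Least_le)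
  have below: "small (restr v i)" if "i < j" for i
    using not_less_Least[of i "\<lambda>j. \<not> small (restr v j)"] that unfolding j_def by blast
  have ls: "len (restr v j) = j" using len_restr[OF vs] jl by (simp add: min_absorb2)
  have "restr v j \<in> Fr"
    unfolding Fr_def using PF_D(3)[OF p v] jn below ls by (simp add: restr_restr min_absorb2 less_imp_le)
  thus ?thesis using restr_le by blast
qed

lemma Fr_unique:
  assumes s: "s \<in> Fr" and s': "s' \<in> Fr" and x: "x \<in> seqs" and sx: "s \<subseteq>\<^sub>m x" and sx': "s' \<subseteq>\<^sub>m x"
  shows "s = s'"
proof -
  have ss: "s \<in> seqs" "s' \<in> seqs" using s s' ps unfolding Fr_def by blast+
  have key: "a = b" if a: "a \<in> Fr" and b: "b \<in> Fr" and ab: "a \<subseteq>\<^sub>m b" for a b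
  proof -
    have as: "a \<in> seqs" "b \<in> seqs" using a b ps unfolding Fr_def by blast+
    have ar: "a = restr b (len a)" using map_le_restr[OF as ab] .
    have le: "len a \<le> len b" using map_le_len[OF as ab] .
    show "a = b"
    proof (cases "len a < len b")
      case True
      hence "small (restr b (len a))" using b unfolding Fr_def by blast
      thus ?thesis using a ar unfolding Fr_def by auto
    next
      case False
      hence "len b \<le> len a" by simp
      thus ?thesis using ar restr_full[OF as(2)] by simp
    qed
  qed
  show ?thesis using comparable_below[OF ss x sx sx'] key s s' by metis
qed

lemma d_sub_q: "s \<in> Fr \<Longrightarrow> ext1 s \<alpha> \<in> p \<Longrightarrow> d (ext1 s \<alpha>) \<subseteq> q"
  unfolding q_def by blast

lemma ext_in_q: "s \<in> Fr \<Longrightarrow> ext1 s \<alpha> \<in> p \<Longrightarrow> ext1 s \<alpha> \<in> q"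
  using d_sub_q d_contains by blast

lemma Fr_in_q:
  assumes s: "s \<in> Fr" shows "s \<in> q"
proof -
  have sp: "s \<in> p" using s unfolding Fr_def by blast
  obtain \<alpha> where a: "ext1 s \<alpha> \<in> p" using succs_ne[OF p filt sp] by blast
  have "restr (ext1 s \<alpha>) (len s) \<in> d (ext1 s \<alpha>)"
    using PF_D(3)[OF dPF[OF a] d_contains[OF a]] .
  hence "s \<in> d (ext1 s \<alpha>)" using PF_ext1(4)[OF p sp] by simp
  thus ?thesis using d_sub_q[OF s a] by blast
qed

lemma L_sub_q: "L \<subseteq> q" unfolding q_def by blast

lemma q_sub_p: "q \<subseteq> p"
  unfolding q_def L_def using dsubp by blast

lemma q_cases:
  assumes x: "x \<in> q"
  shows "x \<in> L \<or> x \<in> Fr \<or> (\<exists>s \<gamma>. s \<in> Fr \<and> ext1 s \<gamma> \<in> p \<and> ext1 s \<gamma> \<subseteq>\<^sub>m x \<and> x \<in> d (ext1 s \<gamma>))"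
proof (cases "x \<in> L")
  case False
  then obtain s \<alpha> where s: "s \<in> Fr" "ext1 s \<alpha> \<in> p" "x \<in> d (ext1 s \<alpha>)" using x unfolding q_def by blast
  let ?e = "ext1 s \<alpha>"
  have sp: "s \<in> p" using s unfolding Fr_def by blast
  have xp: "x \<in> pr p ?e" using s dsub by blast
  have xs: "x \<in> seqs" "?e \<in> seqs" "s \<in> seqs" using xp pr_sub ps s(2) sp by blast+
  show ?thesis
  proof (cases "?e \<subseteq>\<^sub>m x")
    case True thus ?thesis using s by blast
  next
    case False
    hence xe: "x \<subseteq>\<^sub>m ?e" using xp unfolding pr_def by blast
    have xr: "x = restr ?e (len x)" using map_le_restr[OF xs(1,2) xe] .
    have le: "len x \<le> len ?e" using map_le_len[OF xs(1,2) xe] .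
    show ?thesis
    proof (cases "len x = len ?e")
      case True
      hence "x = ?e" using xr restr_full[OF xs(2)] by simp
      hence "?e \<subseteq>\<^sub>m x" by simp
      thus ?thesis using s by blast
    next
      case False
      hence "len x < nxt (len s)" using le PF_ext1(2)[OF p sp] by simp
      hence lxs: "len x \<le> len s" using less_nxt_iff[OF PF_ext1(6)[OF p sp, of \<alpha>]] PF_ext1(2)[OF p sp] by simp
      have "restr ?e (len x) = restr (restr ?e (len s)) (len x)" using lxs by (simp add: restr_restr min_absorb2)
      hence xr2: "x = restr s (len x)" using xr PF_ext1(4)[OF p sp] by simp
      show ?thesis
      proof (cases "len x < len s")
        case True
        hence "small x" using xr2 s(1) unfolding Fr_def by auto
        hence "x \<in> L" using xp pr_sub unfolding L_def by blast
        thus ?thesis by blast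
      next
        case False
        hence "x = s" using xr2 lxs restr_full[OF xs(3)] by simp
        thus ?thesis using s by blast
      qed
    qed
  qed
qed simp


lemma lemmaQ:
  assumes x: "x \<in> q" and s: "s \<in> Fr" and ex: "ext1 s \<gamma> \<subseteq>\<^sub>m x"
  shows "x \<in> d (ext1 s \<gamma>)"
proof -
  have sp: "s \<in> p" using s unfolding Fr_def by blast
  have xp: "x \<in> p" using x q_sub_p by blast
  have xs: "x \<in> seqs" and ss: "s \<in> seqs" using xp sp ps by blast+
  have sx: "s \<subseteq>\<^sub>m x" using map_le_trans[OF PF_ext1(3)[OF p sp] ex] .
  have ns: "\<not> small x" using small_le[OF ss xs sx] s unfolding Fr_def by blast
  have val: "x (len s) = Some \<gamma>" if "ext1 s \<gamma> \<subseteq>\<^sub>m x" for \<gamma>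
  proof -
    have v: "ext1 s \<gamma> (len s) = Some \<gamma>" by (rule PF_ext1(5)[OF p sp])
    have "len s \<in> dom (ext1 s \<gamma>)" using v by blast
    hence "ext1 s \<gamma> (len s) = x (len s)" using that unfolding map_le_def by blast
    thus ?thesis using v by simp
  qed
  have "x \<notin> L" using ns unfolding L_def by blast
  then consider "x \<in> Fr" | s' \<gamma>' where "s' \<in> Fr" "ext1 s' \<gamma>' \<in> p" "ext1 s' \<gamma>' \<subseteq>\<^sub>m x" "x \<in> d (ext1 s' \<gamma>')"
    using q_cases[OF x] by blast
  thus ?thesis
  proof cases
    case 1
    hence "x = s" using Fr_unique[OF 1 s xs map_le_refl sx] by simp
    moreover have "len (ext1 s \<gamma>) \<le> len x" using map_le_len[OF PF_ext1(1)[OF p sp] xs ex] .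
    ultimately show ?thesis using PF_ext1(6)[OF p sp, of \<gamma>] by simp
  next
    case 2
    have s'p: "s' \<in> p" using 2(1) unfolding Fr_def by blast
    have "s' \<subseteq>\<^sub>m x" using map_le_trans[OF PF_ext1(3)[OF p s'p] 2(3)] .
    hence "s' = s" using Fr_unique[OF 2(1) s xs _ sx] by blast
    hence "\<gamma>' = \<gamma>" using val[OF ex] val 2(3) by simp
    thus ?thesis using 2 \<open>s' = s\<close> by simp
  qed
qed

lemma succs_LFr:
  assumes y: "y \<in> L \<or> y \<in> Fr"
  shows "succs q y = succs p y"
proof
  show "succs q y \<subseteq> succs p y" unfolding succs_def using q_sub_p by auto
  show "succs p y \<subseteq> succs q y"
  proof
    fix \<beta> assume "\<beta> \<in> succs p y"
    hence e: "ext1 y \<beta> \<in> p" unfolding succs_def by simp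
    have yp: "y \<in> p" using y unfolding L_def Fr_def by blast
    have ys: "y \<in> seqs" using yp ps by blast
    have "ext1 y \<beta> \<in> q"
    proof (cases "y \<in> Fr")
      case True thus ?thesis using ext_in_q e by blast
    next
      case False
      hence sy: "small y" using y unfolding L_def by blast
      show ?thesis
      proof (cases "small (ext1 y \<beta>)")
        case True thus ?thesis using e L_sub_q unfolding L_def by blast
      next
        case False
        have "\<forall>i<len (ext1 y \<beta>). small (restr (ext1 y \<beta>) i)"
        proof (intro allI impI)
          fix i assume "i < len (ext1 y \<beta>)"
          hence "i \<le> len y" using less_nxt_iff[OF PF_ext1(6)[OF p yp, of \<beta>]] PF_ext1(2)[OF p yp] by simp
          hence "restr (ext1 y \<beta>) i = restr (restr (ext1 y \<beta>) (len y)) i" by (simp add: restr_restr min_absorb2)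
          hence "restr (ext1 y \<beta>) i = restr y i" using PF_ext1(4)[OF p yp] by simp
          thus "small (restr (ext1 y \<beta>) i)" using small_restr[OF ys sy] by simp
        qed
        hence "ext1 y \<beta> \<in> Fr" using e False unfolding Fr_def by blast
        thus ?thesis using Fr_in_q by blast
      qed
    qed
    thus "\<beta> \<in> succs q y" unfolding succs_def by simp
  qed
qed

lemma FrExt:
  assumes s: "s \<in> Fr"
  shows "\<exists>t'. s \<subseteq>\<^sub>m t' \<and> t' \<in> q \<and> succs q t' \<in> F"
proof -
  have sp: "s \<in> p" using s unfolding Fr_def by blast
  obtain \<beta> where e: "ext1 s \<beta> \<in> p" using succs_ne[OF p filt sp] by blast
  let ?e = "ext1 s \<beta>"
  obtain t' where t': "?e \<subseteq>\<^sub>m t'" "t' \<in> d ?e" "succs (d ?e) t' \<in> F"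
    using PF_D(5)[OF dPF[OF e] d_contains[OF e]] by blast
  have sub: "d ?e \<subseteq> q" using d_sub_q[OF s e] .
  have "succs (d ?e) t' \<subseteq> succs q t'" using sub unfolding succs_def by blast
  hence "succs q t' \<in> F" using filter_up[OF filt t'(3)] by blast
  moreover have "s \<subseteq>\<^sub>m t'" using map_le_trans[OF PF_ext1(3)[OF p sp] t'(1)] .
  ultimately show ?thesis using t'(2) sub by blast
qed

lemma deg_LFr:
  assumes x: "x \<in> L \<or> x \<in> Fr" and i: "i \<in> deg p x"
  shows "i \<in> deg q x"
proof -
  have xp: "x \<in> p" using x unfolding L_def Fr_def by blast
  have xs: "x \<in> seqs" using xp ps by blast
  have il: "i < len x" using i unfolding deg_def by blast
  have "small (restr x i)"
  proof (cases "x \<in> Fr")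
    case True thus ?thesis using il unfolding Fr_def by blast
  next
    case False thus ?thesis using x small_restr[OF xs] unfolding L_def by blast
  qed
  hence "restr x i \<in> L" using PF_D(3)[OF p xp] unfolding L_def by blast
  hence "succs q (restr x i) = succs p (restr x i)" using succs_LFr by blast
  thus ?thesis using deg_transfer[OF PF_D(1)[OF p] xs i] by blast
qed


lemma q_restr:
  assumes x: "x \<in> q" shows "restr x i \<in> q"
proof -
  have xp: "x \<in> p" using x q_sub_p by blast
  have xs: "x \<in> seqs" using xp ps by blast
  consider "x \<in> L" | "x \<in> Fr" | s \<gamma> where "s \<in> Fr" "ext1 s \<gamma> \<in> p" "x \<in> d (ext1 s \<gamma>)"
    using q_cases[OF x] by blast
  thus ?thesis
  proof cases
    case 1 thus ?thesis using small_restr[OF xs] PF_D(3)[OF p xp] L_sub_q unfolding L_def by blast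
  next
    case 2
    show ?thesis
    proof (cases "i < len x")
      case True
      hence "small (restr x i)" using 2 unfolding Fr_def by blast
      thus ?thesis using PF_D(3)[OF p xp] L_sub_q unfolding L_def by blast
    next
      case False thus ?thesis using restr_full[OF xs] x by simp
    qed
  next
    case 3 thus ?thesis using PF_D(3)[OF dPF[OF 3(2)]] d_sub_q by blast
  qed
qed

lemma q_deg_third:
  assumes s: "s \<in> Fr" and e: "ext1 s \<gamma> \<in> p" and ex: "ext1 s \<gamma> \<subseteq>\<^sub>m x" and x: "x \<in> d (ext1 s \<gamma>)"
  shows "closed_in (deg q x) (len x)"
proof -
  let ?e = "ext1 s \<gamma>"
  have sp: "s \<in> p" using s unfolding Fr_def by blast
  have xq: "x \<in> q" using x d_sub_q[OF s e] by blast
  have xp: "x \<in> p" using xq q_sub_p by blast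
  have xs: "x \<in> seqs" and ss: "s \<in> seqs" using xp sp ps by blast+
  have sx: "s \<subseteq>\<^sub>m x" using map_le_trans[OF PF_ext1(3)[OF p sp] ex] .
  have sr: "restr x (len s) = s" using map_le_restr[OF ss xs sx] by simp
  have es: "?e \<in> seqs" using PF_ext1(1)[OF p sp] .
  have er: "restr x (len ?e) = ?e" using map_le_restr[OF es xs ex] by simp
  have C1: "i \<in> deg q x" if i: "i \<in> deg p x" "i \<le> len s" for i
  proof -
    have "restr x i = restr s i" using sr i(2) by (metis restr_restr min_absorb2)
    have "restr x i \<in> L \<or> restr x i \<in> Fr"
    proof (cases "i < len s")
      case True
      hence "small (restr x i)" using s \<open>restr x i = restr s i\<close> unfolding Fr_def by simp
      thus ?thesis using PF_D(3)[OF p xp] unfolding L_def by blast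
    next
      case False
      hence "i = len s" using i(2) by simp
      thus ?thesis using sr s by simp
    qed
    hence "succs q (restr x i) = succs p (restr x i)" using succs_LFr by blast
    thus ?thesis using deg_transfer[OF PF_D(1)[OF p] xs i(1)] by blast
  qed
  have C2: "i \<in> deg (d ?e) x" if i: "i \<in> deg q x" "len s < i" for i
  proof -
    obtain w where w: "i < len x" "w \<in> q" "restr w i = restr x i" "i \<in> dom w" "w i \<noteq> x i"
      using i(1) unfolding deg_def by blast
    have le: "len ?e \<le> i" using nxt_le[OF i(2)] PF_ext1(2)[OF p sp] by simp
    have "restr (restr x i) (len ?e) = ?e" using er le by (simp add: restr_restr min_absorb2)
    hence "restr (restr w i) (len ?e) = ?e" using w(3) by simp
    hence "restr w (len ?e) = ?e" using le by (simp add: restr_restr min_absorb2)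
    hence "?e \<subseteq>\<^sub>m w" using restr_le by metis
    hence "w \<in> d ?e" using lemmaQ[OF w(2) s] by blast
    thus ?thesis using w unfolding deg_def by blast
  qed
  show ?thesis
    unfolding closed_in_def
  proof (intro allI impI)
    fix g assume g: "g < len x" and lc: "is_limit g \<and> (\<forall>\<beta><g. \<exists>i\<in>deg q x. \<beta> < i \<and> i < g)"
    show "g \<in> deg q x"
    proof (cases "g \<le> len s")
      case True
      have "\<forall>\<beta><g. \<exists>i\<in>deg p x. \<beta> < i \<and> i < g" using lc deg_mono[OF q_sub_p] by blast
      hence "g \<in> deg p x" using PF_D(8)[OF p xp] g lc unfolding closed_in_def by blast
      thus ?thesis using C1 True by blast
    next
      case False
      hence gs: "len s < g" by simp
      have "\<forall>\<beta><g. \<exists>i\<in>deg (d ?e) x. \<beta> < i \<and> i < g"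
      proof (intro allI impI)
        fix \<beta> assume b: "\<beta> < g"
        have "max \<beta> (len s) < g" using b gs by simp
        then obtain i where i: "i \<in> deg q x" "max \<beta> (len s) < i" "i < g" using lc by blast
        hence "i \<in> deg (d ?e) x" using C2 by simp
        thus "\<exists>i\<in>deg (d ?e) x. \<beta> < i \<and> i < g" using i by auto
      qed
      hence "g \<in> deg (d ?e) x" using PF_D(8)[OF dPF[OF e] x] g lc unfolding closed_in_def by blast
      thus ?thesis using deg_mono[OF d_sub_q[OF s e]] by blast
    qed
  qed
qed

lemma q_limit:
  assumes lim: "is_limit \<delta>" and dd: "dom s' = {..<\<delta>}" and rs: "\<forall>\<alpha><\<delta>. restr s' \<alpha> \<in> q"
  shows "s' \<in> q"
proof -
  have s'p: "s' \<in> p" using PF_D(7)[OF p] lim dd rs q_sub_p by blast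
  have s's: "s' \<in> seqs" using dd by (rule in_seqsI)
  have ls: "len s' = \<delta>" using dd by (rule len_eq)
  show ?thesis
  proof (cases "small s'")
    case True thus ?thesis using s'p L_sub_q unfolding L_def by blast
  next
    case False
    obtain f where f: "f \<in> Fr" "f \<subseteq>\<^sub>m s'" using frontier[OF s'p False] by blast
    show ?thesis
    proof (cases "f = s'")
      case True thus ?thesis using Fr_in_q f by simp
    next
      case False
      have fp: "f \<in> p" using f unfolding Fr_def by blast
      have fs: "f \<in> seqs" using fp ps by blast
      have fr: "restr s' (len f) = f" using map_le_restr[OF fs s's f(2)] by simp
      have lf: "len f < len s'"
      proof -
        have "len f \<le> len s'" using map_le_len[OF fs s's f(2)] .
        moreover have "len f \<noteq> len s'" using fr False restr_full[OF s's] by auto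
        ultimately show ?thesis by simp
      qed
      then obtain \<gamma> where g: "s' (len f) = Some \<gamma>" using seqs_dom[OF s's] by blast
      let ?e = "ext1 f \<gamma>"
      have eq: "restr s' (nxt (len f)) = ?e" using restr_nxt[OF s's lf g] fr by simp
      have ep: "?e \<in> p" using PF_D(3)[OF p s'p] eq by metis
      have "\<forall>\<alpha><\<delta>. restr s' \<alpha> \<in> d ?e"
      proof (intro allI impI)
        fix \<alpha> assume a: "\<alpha> < \<delta>"
        show "restr s' \<alpha> \<in> d ?e"
        proof (cases "nxt (len f) \<le> \<alpha>")
          case True
          have "restr (restr s' \<alpha>) (nxt (len f)) = ?e" using eq True by (simp add: restr_restr min_absorb2)
          hence "?e \<subseteq>\<^sub>m restr s' \<alpha>" using restr_le by metis
          thus ?thesis using lemmaQ[OF _ f(1)] rs a by blast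
        next
          case False
          have "restr ?e \<alpha> = restr s' \<alpha>" using eq False by (metis restr_restr min.commute min_absorb2 nle_le)
          moreover have "restr ?e \<alpha> \<in> d ?e" using PF_D(3)[OF dPF[OF ep] d_contains[OF ep]] .
          ultimately show ?thesis by simp
        qed
      qed
      hence "s' \<in> d ?e" using PF_D(7)[OF dPF[OF ep]] lim dd by blast
      thus ?thesis using d_sub_q[OF f(1) ep] by blast
    qed
  qed
qed


lemma q_PF: "q \<in> PF F"
proof (rule PF_I)
  show "subtree q"
    unfolding subtree_def
  proof (intro conjI ballI allI)
    obtain t where t: "t \<in> p" using PF_D(1)[OF p] unfolding subtree_def by blast
    show "q \<noteq> {}"
    proof (cases "small t")
      case True thus ?thesis using t L_sub_q unfolding L_def by blast
    next
      case False thus ?thesis using frontier[OF t] Fr_in_q by blast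
    qed
    show "q \<subseteq> seqs" using q_sub_p ps by blast
    fix s i assume "s \<in> q" thus "restr s i \<in> q" by (rule q_restr)
  qed
  show "\<forall>\<alpha>. \<exists>s\<in>q. \<alpha> < len s"
  proof
    fix \<alpha>
    obtain t where t: "t \<in> p" "\<alpha> < len t" using PF_D(4)[OF p] by blast
    show "\<exists>s\<in>q. \<alpha> < len s"
    proof (cases "small t")
      case True thus ?thesis using t L_sub_q unfolding L_def by blast
    next
      case False
      obtain f where f: "f \<in> Fr" using frontier[OF t(1) False] by blast
      have fp: "f \<in> p" using f unfolding Fr_def by blast
      obtain \<beta> where e: "ext1 f \<beta> \<in> p" using succs_ne[OF p filt fp] by blast
      obtain z where "z \<in> d (ext1 f \<beta>)" "\<alpha> < len z" using PF_D(4)[OF dPF[OF e]] by blast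
      thus ?thesis using d_sub_q[OF f e] by blast
    qed
  qed
  show "\<forall>s\<in>q. \<exists>t. s \<subseteq>\<^sub>m t \<and> t \<in> q \<and> succs q t \<in> F"
  proof
    fix x assume x: "x \<in> q"
    have xp: "x \<in> p" using x q_sub_p by blast
    have xs: "x \<in> seqs" using xp ps by blast
    consider "x \<in> L" | "x \<in> Fr" | s \<gamma> where "s \<in> Fr" "ext1 s \<gamma> \<in> p" "x \<in> d (ext1 s \<gamma>)"
      using q_cases[OF x] by blast
    thus "\<exists>t. x \<subseteq>\<^sub>m t \<and> t \<in> q \<and> succs q t \<in> F"
    proof cases
      case 1
      obtain t where t: "x \<subseteq>\<^sub>m t" "t \<in> p" "succs p t \<in> F" using PF_D(5)[OF p xp] by blast
      show ?thesis
      proof (cases "small t")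
        case True
        hence tL: "t \<in> L" using t unfolding L_def by blast
        thus ?thesis using succs_LFr[of t] t L_sub_q by auto
      next
        case False
        obtain f where f: "f \<in> Fr" "f \<subseteq>\<^sub>m t" using frontier[OF t(2) False] by blast
        have ts: "t \<in> seqs" and fs: "f \<in> seqs" using t(2) f ps unfolding Fr_def by blast+
        have "x \<subseteq>\<^sub>m f"
        proof (rule ccontr)
          assume "\<not> x \<subseteq>\<^sub>m f"
          hence "f \<subseteq>\<^sub>m x" using comparable_below[OF xs fs ts t(1) f(2)] by blast
          hence "small f" using small_le[OF fs xs] 1 unfolding L_def by blast
          thus False using f unfolding Fr_def by blast
        qed
        thus ?thesis using FrExt[OF f(1)] map_le_trans by blast
      qed
    next
      case 2 thus ?thesis using FrExt by blast
    next
      case 3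
      obtain t where t: "x \<subseteq>\<^sub>m t" "t \<in> d (ext1 s \<gamma>)" "succs (d (ext1 s \<gamma>)) t \<in> F"
        using PF_D(5)[OF dPF[OF 3(2)] 3(3)] by blast
      have sub: "d (ext1 s \<gamma>) \<subseteq> q" using d_sub_q[OF 3(1,2)] .
      have "succs (d (ext1 s \<gamma>)) t \<subseteq> succs q t" using sub unfolding succs_def by blast
      hence "succs q t \<in> F" using filter_up[OF filt t(3)] by blast
      thus ?thesis using t sub by blast
    qed
  qed
  show "\<forall>s\<in>q. (\<exists>\<alpha>. succs q s = {\<alpha>}) \<or> succs q s \<in> F"
  proof
    fix x assume x: "x \<in> q"
    have xp: "x \<in> p" using x q_sub_p by blast
    consider "x \<in> L \<or> x \<in> Fr" | s \<gamma> where "s \<in> Fr" "ext1 s \<gamma> \<in> p" "ext1 s \<gamma> \<subseteq>\<^sub>m x" "x \<in> d (ext1 s \<gamma>)"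
      using q_cases[OF x] by blast
    thus "(\<exists>\<alpha>. succs q x = {\<alpha>}) \<or> succs q x \<in> F"
    proof cases
      case 1 thus ?thesis using succs_LFr PF_D(6)[OF p xp] by simp
    next
      case 2
      have "succs q x = succs (d (ext1 s \<gamma>)) x"
      proof
        show "succs (d (ext1 s \<gamma>)) x \<subseteq> succs q x" using d_sub_q[OF 2(1,2)] unfolding succs_def by blast
        show "succs q x \<subseteq> succs (d (ext1 s \<gamma>)) x"
        proof
          fix \<beta> assume "\<beta> \<in> succs q x"
          hence bq: "ext1 x \<beta> \<in> q" unfolding succs_def by simp
          have "ext1 s \<gamma> \<subseteq>\<^sub>m ext1 x \<beta>" using map_le_trans[OF 2(3) PF_ext1(3)[OF p xp]] .
          hence "ext1 x \<beta> \<in> d (ext1 s \<gamma>)" using lemmaQ[OF bq 2(1)] by blast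
          thus "\<beta> \<in> succs (d (ext1 s \<gamma>)) x" unfolding succs_def by simp
        qed
      qed
      thus ?thesis using PF_D(6)[OF dPF[OF 2(2)] 2(4)] by simp
    qed
  qed
  show "\<forall>\<delta> s. is_limit \<delta> \<longrightarrow> dom s = {..<\<delta>} \<longrightarrow> (\<forall>\<alpha><\<delta>. restr s \<alpha> \<in> q) \<longrightarrow> s \<in> q"
    using q_limit by blast
  show "\<forall>s\<in>q. closed_in (deg q s) (len s)"
  proof
    fix x assume x: "x \<in> q"
    have xp: "x \<in> p" using x q_sub_p by blast
    consider "x \<in> L \<or> x \<in> Fr" | s \<gamma> where "s \<in> Fr" "ext1 s \<gamma> \<in> p" "ext1 s \<gamma> \<subseteq>\<^sub>m x" "x \<in> d (ext1 s \<gamma>)"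
      using q_cases[OF x] by blast
    thus "closed_in (deg q x) (len x)"
    proof cases
      case 1
      have "deg q x = deg p x" using deg_mono[OF q_sub_p] deg_LFr[OF 1] by blast
      thus ?thesis using PF_D(8)[OF p xp] by simp
    next
      case 2 thus ?thesis using q_deg_third by blast
    qed
  qed
qed

lemma q_le_zeta: "le_zeta \<zeta> p q"
  unfolding le_zeta_def le_P_def using q_sub_p L_sub_q unfolding L_def small_def by blast

lemma q_predense: "predense_above (PF F) (d ` p) q"
  unfolding predense_above_def le_P_def compatible_def
proof (intro ballI impI)
  fix r assume r: "r \<in> PF F" and rq: "r \<subseteq> q"
  have rp: "r \<subseteq> p" using rq q_sub_p by blast
  show "\<exists>dd\<in>d ` p. \<exists>u\<in>PF F. u \<subseteq> r \<and> u \<subseteq> dd"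
  proof (cases "\<exists>w\<in>r. \<forall>t\<in>p. w \<subseteq>\<^sub>m t \<longrightarrow> t \<in> r")
    case True
    then obtain w where w: "w \<in> r" "\<forall>t\<in>p. w \<subseteq>\<^sub>m t \<longrightarrow> t \<in> r" by blast
    have wp: "w \<in> p" using w rp by blast
    have ws: "w \<in> seqs" using wp ps by blast
    have "pr p w \<subseteq> r"
    proof
      fix z assume z: "z \<in> pr p w"
      have zs: "z \<in> seqs" using z pr_sub ps by blast
      show "z \<in> r"
      proof (cases "z \<subseteq>\<^sub>m w")
        case True
        have "z = restr w (len z)" using map_le_restr[OF zs ws True] .
        thus ?thesis using PF_D(3)[OF r w(1)] by metis
      next
        case False thus ?thesis using z w(2) unfolding pr_def by blast
      qed
    qed
    hence "d w \<subseteq> r" using dsub[OF wp] by blast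
    thus ?thesis using wp dPF[OF wp] by blast
  next
    case False
    hence hyp: "\<forall>w\<in>r. \<exists>t\<in>p. w \<subseteq>\<^sub>m t \<and> t \<notin> r" by blast
    obtain v where v: "v \<in> r" "\<not> otp_less (deg p v) \<zeta>"
      using chain_deg[OF co reg filt r rp PF_D(1)[OF p] hyp] by blast
    have vp: "v \<in> p" using v rp by blast
    have vs: "v \<in> seqs" using vp ps by blast
    obtain s where s: "s \<in> Fr" "s \<subseteq>\<^sub>m v" using frontier[OF vp] v(2) unfolding small_def by blast
    have sp: "s \<in> p" using s unfolding Fr_def by blast
    have ss: "s \<in> seqs" using sp ps by blast
    obtain t where t: "v \<subseteq>\<^sub>m t" "t \<in> r" "succs r t \<in> F" using PF_D(5)[OF r v(1)] by blast
    obtain \<beta> where b: "ext1 t \<beta> \<in> r" using succs_ne[OF r filt t(2)] by blast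
    let ?w = "ext1 t \<beta>"
    have ts: "t \<in> seqs" using t(2) rp ps by blast
    have wq: "?w \<in> q" using b rq by blast
    have wp: "?w \<in> p" using b rp by blast
    have ws: "?w \<in> seqs" using wp ps by blast
    have sw: "s \<subseteq>\<^sub>m ?w" using map_le_trans[OF map_le_trans[OF s(2) t(1)] PF_ext1(3)[OF r t(2)]] .
    have lsw: "len s < len ?w"
    proof -
      have "len s \<le> len t" using map_le_len[OF ss ts map_le_trans[OF s(2) t(1)]] .
      thus ?thesis using PF_ext1(6)[OF r t(2), of \<beta>] by simp
    qed
    then obtain \<gamma> where g: "?w (len s) = Some \<gamma>" using seqs_dom[OF ws] by blast
    have swr: "restr ?w (len s) = s" using map_le_restr[OF ss ws sw] by simp
    have eq: "restr ?w (nxt (len s)) = ext1 s \<gamma>" using restr_nxt[OF ws lsw g] swr by simp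
    let ?e = "ext1 s \<gamma>"
    have ep: "?e \<in> p" using PF_D(3)[OF p wp] eq by metis
    have ew: "?e \<subseteq>\<^sub>m ?w" using restr_le eq by metis
    have wd: "?w \<in> d ?e" using lemmaQ[OF wq s(1) ew] .
    have uPF: "pr r ?w \<in> PF F" using pr_PF[OF co reg filt r b] .
    have "pr r ?w \<subseteq> d ?e"
    proof
      fix z assume z: "z \<in> pr r ?w"
      have zr: "z \<in> r" using z pr_sub by blast
      have zs: "z \<in> seqs" using zr rp ps by blast
      show "z \<in> d ?e"
      proof (cases "z \<subseteq>\<^sub>m ?w")
        case True
        have "z = restr ?w (len z)" using map_le_restr[OF zs ws True] .
        thus ?thesis using PF_D(3)[OF dPF[OF ep] wd] by metis
      next
        case False
        hence "?w \<subseteq>\<^sub>m z" using z unfolding pr_def by blast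
        hence "?e \<subseteq>\<^sub>m z" using map_le_trans[OF ew] by blast
        thus ?thesis using lemmaQ[OF _ s(1)] zr rq by blast
      qed
    qed
    hence "pr r ?w \<subseteq> r \<and> pr r ?w \<subseteq> d ?e" using pr_sub by blast
    hence "\<exists>u\<in>PF F. u \<subseteq> r \<and> u \<subseteq> d ?e" using uPF by blast
    moreover have "d ?e \<in> d ` p" using ep by (rule imageI)
    ultimately show ?thesis by blast
  qed
qed

end

theorem lemma4p8:
  fixes F :: "('k::wellorder) set set"
  assumes "card_order (kord :: 'k rel)"
    and "Cinfinite (kord :: 'k rel)"
    and "regularCard (kord :: 'k rel)"
    and "(card_of (seqs :: ('k \<rightharpoonup> 'k) set), kord :: 'k rel) \<in> ordIso"
    and "is_filter F"
    and "lt_kappa_complete F"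
  shows "\<forall>D p \<zeta>. dense_in (PF F) D \<longrightarrow> p \<in> PF F \<longrightarrow>
           (\<exists>q\<in>PF F. le_zeta \<zeta> p q \<and>
              (\<exists>D'. D' \<subseteq> D \<and> (card_of D', kord :: 'k rel) \<in> ordLeq \<and> predense_above (PF F) D' q))"
proof (intro allI impI)
  fix D p \<zeta>
  assume dn: "dense_in (PF F) D" and pP: "p \<in> PF F"
  have DP: "D \<subseteq> PF F" and dens: "\<forall>x\<in>PF F. \<exists>dd\<in>D. le_P x dd" using dn unfolding dense_in_def by blast+
  have "\<forall>t\<in>p. \<exists>dd. dd \<in> D \<and> dd \<subseteq> pr p t"
  proof
    fix t assume t: "t \<in> p"
    have "pr p t \<in> PF F" using pr_PF[OF assms(1) assms(3) assms(5) pP t] .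
    then obtain dd where "dd \<in> D" "le_P (pr p t) dd" using dens by blast
    thus "\<exists>dd. dd \<in> D \<and> dd \<subseteq> pr p t" unfolding le_P_def by blast
  qed
  then obtain d where d: "\<forall>t\<in>p. d t \<in> D \<and> d t \<subseteq> pr p t"
    by (rule bchoice[THEN exE]) blast
  interpret M: mast F D p \<zeta> d
    by unfold_locales (use assms(1) assms(3) assms(5) pP DP d in auto)
  have card: "(card_of (d ` p), kord :: 'k rel) \<in> ordLeq"
  proof -
    have "|d ` p| \<le>o |p|" by (rule card_of_image)
    moreover have "|p| \<le>o |seqs :: ('k \<rightharpoonup> 'k) set|" using card_of_mono1[OF M.ps] .
    ultimately have "|d ` p| \<le>o |seqs :: ('k \<rightharpoonup> 'k) set|" by (rule ordLeq_transitive)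
    thus ?thesis using assms(4) ordLeq_ordIso_trans by blast
  qed
  have sub: "d ` p \<subseteq> D" using d by blast
  show "\<exists>q\<in>PF F. le_zeta \<zeta> p q \<and>
              (\<exists>D'. D' \<subseteq> D \<and> (card_of D', kord :: 'k rel) \<in> ordLeq \<and> predense_above (PF F) D' q)"
    using M.q_PF M.q_le_zeta M.q_predense sub card by blast
qed


end
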